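(* Let $\mathbb{X},\mathbb{X}'\subseteq\mathbb{P}^{k-1}$ be sets of $n\ge2$ $\mathbb{F}_q$-rational points each, let $L,L'\in P_1$ be linear forms with $L$ vanishing at no point of $\mathbb{X}$ and $L'$ vanishing at no point of $\mathbb{X}'$, and let $\Phi_{\mathbb{X}}$ (built with $L$) and $\Phi_{\mathbb{X}'}$ (built with $L'$) be Macaulay inverse polynomials. Let $A\in\mathrm{GL}_k(\mathbb{F}_q)$ satisfy $\lambda_A(L)=L'$. If $\Lambda_A(\mathbb{X})=\mathbb{X}'$, then $r_{\mathbb{X}}=r_{\mathbb{X}'}$ and there is $c\in\mathbb{F}_q\setminus\{0\}$ such that $\Phi_{\mathbb{X}'}(\lambda_A(g))=c\,\Phi_{\mathbb{X}}(g)$ for all $g\in P_{2r_{\mathbb{X}}-1}$.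
   Context: $P=\mathbb{F}_q[x_1,\dots,x_k]$ standard graded. For a set $\mathbb{X}=\{p_1,\dots,p_n\}$ of distinct $\mathbb{F}_q$-rational points of $\mathbb{P}^{k-1}$: $R=P/I_{\mathbb{X}}$, $r_{\mathbb{X}}=\min\{i:\dim R_i=n\}$; given $L$ vanishing at no point, $\ell$ its class, $v_j$ the representative of $p_j$ with $L(v_j)=1$, $f(p_j)=f(v_j)$; separators $f_1,\dots,f_n\in R_{r_{\mathbb{X}}}$ with $f_i(p_j)=\delta_{ij}$; canonical ideal $\mathfrak{J}_{R/\mathbb{F}_q[\ell]}=\{\sum_i\varphi(f_i)f_i:\varphi\in\mathrm{Hom}_{\mathbb{F}_q[\ell]}(R,\mathbb{F}_q[\ell])\}$; $\widehat{\mathfrak{J}}_{\mathbb{X}}\subseteq P$ its preimage, so that $D_{\mathbb{X}}=P/\widehat{\mathfrak{J}}_{\mathbb{X}}$ (the doubling) is Artinian Gorenstein with top degree $2r_{\mathbb{X}}-1$. The graded dual $\mathcal{D}=\bigoplus_j\mathrm{Hom}_{\mathbb{F}_q}(P_j,\mathbb{F}_q)$ is a $P$-module via contraction $(f\circ\psi)(g)=\psi(fg)$; the Macaulay inverse system of an ideal $J$ is $J^\perp=\{\psi:f\circ\psi=0\ \forall f\in J\}$. A Macaulay inverse polynomial $\Phi_{\mathbb{X}}$ is an element of $\mathrm{Hom}_{\mathbb{F}_q}(P_{2r_{\mathbb{X}}-1},\mathbb{F}_q)$ generating $(\widehat{\mathfrak{J}}_{\mathbb{X}})^\perp$ as a $P$-module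 (unique up to a nonzero scalar). For $A\in\mathrm{GL}_k(\mathbb{F}_q)$, $\Lambda_A(p)=Ap$ on $\mathbb{P}^{k-1}$ and $\lambda_A:P\to P$ is the graded automorphism $\lambda_A(f)(v)=f(A^{-1}v)$. *)

theory Defs
  imports "HOL-Analysis.Analysis" "HOL-Library.Poly_Mapping"
begin

text \<open>Polynomial ring P = F[x_i : i in 'n] (k = CARD('n)), as finitely supported
 maps from exponent vectors (monomials) to coefficients.\<close>

type_synonym ('n, 'a) mpoly = "('n \<Rightarrow>\<^sub>0 nat) \<Rightarrow>\<^sub>0 'a"

definition mdeg :: "('n::finite \<Rightarrow>\<^sub>0 nat) \<Rightarrow> nat" where
  "mdeg m = (\<Sum>i\<in>UNIV. Poly_Mapping.lookup m i)"

definition Const :: "'a::zero \<Rightarrow> ('n, 'a) mpoly" where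
  "Const c = Poly_Mapping.single 0 c"

definition Var :: "'n \<Rightarrow> ('n, 'a::{zero,one}) mpoly" where
  "Var i = Poly_Mapping.single (Poly_Mapping.single i 1) 1"

definition smul :: "'a::semiring_0 \<Rightarrow> ('n, 'a) mpoly \<Rightarrow> ('n, 'a) mpoly" where
  "smul c f = Poly_Mapping.map (\<lambda>x. c * x) f"

definition Pdeg :: "nat \<Rightarrow> ('n::finite, 'a::zero) mpoly set" where
  "Pdeg j = {f. \<forall>m\<in>Poly_Mapping.keys f. mdeg m = j}"

definition hcomp :: "nat \<Rightarrow> ('n::finite, 'a::zero) mpoly \<Rightarrow> ('n, 'a) mpoly" where
  "hcomp j f = Abs_poly_mapping (\<lambda>m. if mdeg m = j then Poly_Mapping.lookup f m else 0)"

definition peval :: "('n::finite, 'a::comm_semiring_1) mpoly \<Rightarrow> 'a^'n \<Rightarrow> 'a" where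
  "peval f v = (\<Sum>m\<in>Poly_Mapping.keys f. Poly_Mapping.lookup f m * (\<Prod>i\<in>UNIV. (v $ i) ^ Poly_Mapping.lookup m i))"

definition psubst :: "('n \<Rightarrow> ('n, 'a) mpoly) \<Rightarrow> ('n::finite, 'a::comm_semiring_1) mpoly \<Rightarrow> ('n, 'a) mpoly" where
  "psubst \<sigma> f = (\<Sum>m\<in>Poly_Mapping.keys f. Const (Poly_Mapping.lookup f m) * (\<Prod>i\<in>UNIV. (\<sigma> i) ^ Poly_Mapping.lookup m i))"

text \<open>lambda_A: graded automorphism with lambda_A(f)(v) = f(A^{-1} v), i.e. the
 substitution x_i := sum_j (A^{-1})_{ij} x_j.\<close>
definition lamA :: "'a^'n^'n \<Rightarrow> ('n::finite, 'a::field) mpoly \<Rightarrow> ('n, 'a) mpoly" where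
  "lamA A f = psubst (\<lambda>i. \<Sum>j\<in>UNIV. Const (matrix_inv A $ i $ j) * Var j) f"

text \<open>Points of P^{k-1} over F: lines through the origin minus 0.\<close>
definition proj_pt :: "'a::field^'n \<Rightarrow> ('a^'n) set" where
  "proj_pt v = {c *s v | c. c \<noteq> 0}"

definition is_ppoint :: "('a::field^'n) set \<Rightarrow> bool" where
  "is_ppoint p \<longleftrightarrow> (\<exists>v. v \<noteq> 0 \<and> p = proj_pt v)"

definition LamA :: "'a::field^'n^'n \<Rightarrow> ('a^'n) set \<Rightarrow> ('a^'n) set" where
  "LamA A p = (\<lambda>w. A *v w) ` p"

definition nrep :: "('n::finite, 'a::field) mpoly \<Rightarrow> ('a^'n) set \<Rightarrow> 'a^'n" where
  "nrep L p = (THE v. v \<in> p \<and> peval L v = 1)"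

definition vanI :: "('a::field^'n::finite) set set \<Rightarrow> ('n, 'a) mpoly set" where
  "vanI X = {f. \<forall>j. \<forall>p\<in>X. \<forall>v\<in>p. peval (hcomp j f) v = 0}"

text \<open>dim_F R_i = dim_F P_i - dim_F (I_X)_i, with R = P / I_X.\<close>
definition hf :: "('a::{field,finite}^'n::finite) set set \<Rightarrow> nat \<Rightarrow> nat" where
  "hf X i = vector_space.dim (smul :: 'a \<Rightarrow> ('n,'a) mpoly \<Rightarrow> _) (Pdeg i)
          - vector_space.dim (smul :: 'a \<Rightarrow> ('n,'a) mpoly \<Rightarrow> _) (Pdeg i \<inter> vanI X)"

definition regidx :: "('a::{field,finite}^'n::finite) set set \<Rightarrow> nat" where
  "regidx X = (LEAST i. hf X i = card X)"

definition sep :: "('a::{field,finite}^'n::finite) set set \<Rightarrow> ('n, 'a) mpoly \<Rightarrow> ('a^'n) set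
     \<Rightarrow> ('n, 'a) mpoly" where
  "sep X L p = (SOME f. f \<in> Pdeg (regidx X) \<and>
       (\<forall>p'\<in>X. peval f (nrep L p') = (if p' = p then 1 else 0)))"

text \<open>Subring F[ell] (represented in P as polynomials in L).\<close>
definition FL :: "('n::finite, 'a::field) mpoly \<Rightarrow> ('n, 'a) mpoly set" where
  "FL L = {f. \<exists>N c. f = (\<Sum>i<N. Const (c i) * L ^ i)}"

text \<open>A map phi : P -> P representing an element of Hom_{F[ell]}(R, F[ell]):
 well defined modulo I_X, with values in F[ell], additive and F[ell]-linear in R.\<close>
definition is_hom :: "('a::{field,finite}^'n::finite) set set \<Rightarrow> ('n, 'a) mpoly
     \<Rightarrow> (('n, 'a) mpoly \<Rightarrow> ('n, 'a) mpoly) \<Rightarrow> bool" where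
  "is_hom X L \<phi> \<longleftrightarrow>
     (\<forall>f g. f - g \<in> vanI X \<longrightarrow> \<phi> f - \<phi> g \<in> vanI X) \<and>
     (\<forall>f. \<exists>u\<in>FL L. \<phi> f - u \<in> vanI X) \<and>
     (\<forall>f g. \<phi> (f + g) - (\<phi> f + \<phi> g) \<in> vanI X) \<and>
     (\<forall>u\<in>FL L. \<forall>f. \<phi> (u * f) - u * \<phi> f \<in> vanI X)"

text \<open>Preimage in P of the canonical ideal J_{R/F[ell]}.\<close>
definition Jhat :: "('a::{field,finite}^'n::finite) set set \<Rightarrow> ('n, 'a) mpoly \<Rightarrow> ('n, 'a) mpoly set" where
  "Jhat X L = {g. \<exists>\<phi>. is_hom X L \<phi> \<and>
      g - (\<Sum>p\<in>X. \<phi> (sep X L p) * sep X L p) \<in> vanI X}"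

text \<open>Graded dual D = (+)_j Hom_F(P_j, F), an element (psi_j)_j being identified
 with the F-linear functional g |-> sum_j psi_j(g_j) on P (vanishing in high degrees).\<close>
definition gdual :: "(('n::finite, 'a::field) mpoly \<Rightarrow> 'a) set" where
  "gdual = {\<psi>. (\<forall>f g. \<psi> (f + g) = \<psi> f + \<psi> g) \<and> (\<forall>c f. \<psi> (smul c f) = c * \<psi> f) \<and>
              (\<exists>N. \<forall>f. (\<forall>m\<in>Poly_Mapping.keys f. N \<le> mdeg m) \<longrightarrow> \<psi> f = 0)}"

definition contr :: "('n::finite, 'a::field) mpoly \<Rightarrow> (('n, 'a) mpoly \<Rightarrow> 'a) \<Rightarrow> (('n, 'a) mpoly \<Rightarrow> 'a)" where
  "contr f \<psi> = (\<lambda>g. \<psi> (f * g))"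

definition iperp :: "('n::finite, 'a::field) mpoly set \<Rightarrow> (('n, 'a) mpoly \<Rightarrow> 'a) set" where
  "iperp J = {\<psi>\<in>gdual. \<forall>f\<in>J. contr f \<psi> = (\<lambda>_. 0)}"

text \<open>Phi is a Macaulay inverse polynomial of X (built with L): an element of
 Hom_F(P_{2r_X-1}, F) (a functional factoring through the degree 2r_X-1 component)
 generating (Jhat_X)^perp as a P-module.\<close>
definition is_mip :: "('a::{field,finite}^'n::finite) set set \<Rightarrow> ('n, 'a) mpoly
     \<Rightarrow> (('n, 'a) mpoly \<Rightarrow> 'a) \<Rightarrow> bool" where
  "is_mip X L \<Phi> \<longleftrightarrow> \<Phi> \<in> gdual \<and> (\<forall>g. \<Phi> g = \<Phi> (hcomp (2 * regidx X - 1) g)) \<and>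
      iperp (Jhat X L) = {contr f \<Phi> | f. True}"

end

theory Submission
  imports Defs "HOL-Library.Function_Algebras"
begin
lemma mpoly_eq_sum_single: "f = (\<Sum>m\<in>Poly_Mapping.keys f. Poly_Mapping.single m (Poly_Mapping.lookup f m))"
proof (rule poly_mapping_eqI)
  fix k
  show "Poly_Mapping.lookup f k = Poly_Mapping.lookup (\<Sum>m\<in>Poly_Mapping.keys f. Poly_Mapping.single m (Poly_Mapping.lookup f m)) k"
    by (cases "k \<in> Poly_Mapping.keys f")
       (auto simp: lookup_sum lookup_single when_def in_keys_iff)
qed

lemma pm_induct[case_names zero single add]:
  fixes f :: "'a \<Rightarrow>\<^sub>0 'b::comm_monoid_add"
  assumes z: "P 0" and s: "\<And>m c. P (Poly_Mapping.single m c)"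
    and a: "\<And>f g. P f \<Longrightarrow> P g \<Longrightarrow> P (f + g)"
  shows "P f"
proof -
  have "\<And>S. finite S \<Longrightarrow> P (\<Sum>m\<in>S. Poly_Mapping.single m (Poly_Mapping.lookup f m))"
  proof -
    fix S :: "'a set" assume "finite S"
    then show "P (\<Sum>m\<in>S. Poly_Mapping.single m (Poly_Mapping.lookup f m))"
      by (induct S rule: finite_induct) (auto intro: z s a)
  qed
  then show ?thesis using mpoly_eq_sum_single[of f] by (metis finite_keys)
qed

definition ext :: "('a::zero \<Rightarrow> 'b::comm_semiring_1) \<Rightarrow> ('m \<Rightarrow> 'b) \<Rightarrow> ('m \<Rightarrow>\<^sub>0 'a) \<Rightarrow> 'b" where
  "ext \<phi> M f = (\<Sum>m\<in>Poly_Mapping.keys f. \<phi> (Poly_Mapping.lookup f m) * M m)"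

lemma ext_superset:
  assumes "finite S" "Poly_Mapping.keys f \<subseteq> S" "\<phi> 0 = 0"
  shows "ext \<phi> M f = (\<Sum>m\<in>S. \<phi> (Poly_Mapping.lookup f m) * M m)"
  unfolding ext_def using assms
  by (intro sum.mono_neutral_left) (auto simp: in_keys_iff)

lemma ext_zero[simp]: "ext \<phi> M 0 = 0"
  by (simp add: ext_def)

lemma ext_add:
  assumes "\<phi> 0 = 0" "\<And>a b. \<phi> (a + b) = \<phi> a + \<phi> b"
  shows "ext \<phi> M (f + g) = ext \<phi> M f + ext \<phi> M g"
proof -
  let ?S = "Poly_Mapping.keys f \<union> Poly_Mapping.keys g"
  have k: "Poly_Mapping.keys (f + g) \<subseteq> ?S" by (rule keys_add)
  have "ext \<phi> M (f + g) = (\<Sum>m\<in>?S. \<phi> (Poly_Mapping.lookup (f+g) m) * M m)"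
    by (rule ext_superset) (use assms k in auto)
  also have "\<dots> = (\<Sum>m\<in>?S. \<phi> (Poly_Mapping.lookup f m) * M m) + (\<Sum>m\<in>?S. \<phi> (Poly_Mapping.lookup g m) * M m)"
    by (simp add: lookup_add assms(2) distrib_right sum.distrib)
  also have "\<dots> = ext \<phi> M f + ext \<phi> M g"
    by (subst (1 2) ext_superset[where S="?S"]) (use assms in auto)
  finally show ?thesis .
qed

lemma ext_single:
  assumes "\<phi> 0 = 0"
  shows "ext \<phi> M (Poly_Mapping.single m c) = \<phi> c * M m"
  using assms by (cases "c = 0") (auto simp: ext_def)

lemma ext_sum:
  assumes "\<phi> 0 = 0" "\<And>a b. \<phi> (a + b) = \<phi> a + \<phi> b"
  shows "ext \<phi> M (\<Sum>i\<in>I. F i) = (\<Sum>i\<in>I. ext \<phi> M (F i))"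
  by (induct I rule: infinite_finite_induct) (auto simp: ext_add[OF assms])

lemma ext_mult:
  fixes f g :: "'m::monoid_add \<Rightarrow>\<^sub>0 'a::semiring_0"
  assumes "\<phi> 0 = 0" "\<And>a b. \<phi> (a + b) = \<phi> a + \<phi> b" "\<And>a b. \<phi> (a * b) = \<phi> a * \<phi> b"
    "\<And>a b. M (a + b) = M a * M b"
  shows "ext \<phi> M (f * g) = ext \<phi> M f * ext \<phi> M g"
proof (induct f rule: pm_induct)
  case zero then show ?case by simp
next
  case (add f1 f2) then show ?case by (simp add: distrib_right distrib_left ext_add[OF assms(1,2)])
next
  case (single m c)
  show ?case
  proof (induct g rule: pm_induct)
    case zero then show ?case by simp
  next
    case (add g1 g2) then show ?case by (simp add: distrib_right distrib_left ext_add[OF assms(1,2)])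
  next
    case (single m' c')
    then show ?case by (simp add: mult_single ext_single assms mult_ac)
  qed
qed

lemma ext_uminus:
  fixes f :: "'m \<Rightarrow>\<^sub>0 'a::ab_group_add" and M :: "'m \<Rightarrow> 'b::comm_ring_1"
  assumes "\<phi> 0 = 0" "\<And>a b. \<phi> (a + b) = \<phi> a + \<phi> b"
  shows "ext \<phi> M (- f) = - ext \<phi> M f"
proof -
  have "ext \<phi> M f + ext \<phi> M (- f) = 0" using ext_add[OF assms, of M f "- f"] by simp
  then show ?thesis by (metis add.commute eq_neg_iff_add_eq_0)
qed

lemma ext_diff:
  fixes f :: "'m \<Rightarrow>\<^sub>0 'a::ab_group_add" and M :: "'m \<Rightarrow> 'b::comm_ring_1"
  assumes "\<phi> 0 = 0" "\<And>a b. \<phi> (a + b) = \<phi> a + \<phi> b"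
  shows "ext \<phi> M (f - g) = ext \<phi> M f - ext \<phi> M g"
  using ext_add[OF assms, of M f "- g"] ext_uminus[OF assms, of M g] by simp

lemma ext_prod:
  fixes F :: "'i \<Rightarrow> ('m::comm_monoid_add \<Rightarrow>\<^sub>0 'a::comm_semiring_1)"
  assumes "\<phi> 0 = 0" "\<And>a b. \<phi> (a + b) = \<phi> a + \<phi> b" "\<And>a b. \<phi> (a * b) = \<phi> a * \<phi> b"
    "\<And>a b. M (a + b) = M a * M b" "\<phi> 1 = 1" "M 0 = 1"
  shows "ext \<phi> M (\<Prod>i\<in>I. F i) = (\<Prod>i\<in>I. ext \<phi> M (F i))"
proof (induct I rule: infinite_finite_induct)
  case (infinite A) then show ?case
    by (simp add: one_poly_mapping.abs_eq[symmetric]) (metis ext_single assms(1,5,6) mult_1 single_one)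
next
  case empty then show ?case by (metis ext_single assms(1,5,6) mult_1 single_one prod.empty)
next
  case (insert x F) then show ?case by (simp add: ext_mult[OF assms(1-4)])
qed

definition monx :: "('n::finite \<Rightarrow> 'b::comm_semiring_1) \<Rightarrow> ('n \<Rightarrow>\<^sub>0 nat) \<Rightarrow> 'b" where
  "monx x m = (\<Prod>i\<in>UNIV. x i ^ Poly_Mapping.lookup m i)"

lemma monx_add: "monx x (a + b) = monx x a * monx x b"
  by (simp add: monx_def lookup_add power_add prod.distrib)

lemma monx_0[simp]: "monx x 0 = 1"
  by (simp add: monx_def)

lemma monx_single1: "monx x (Poly_Mapping.single i 1) = x i"
proof -
  have "monx x (Poly_Mapping.single i 1) = (\<Prod>j\<in>UNIV. if j = i then x i else 1)"
    unfolding monx_def by (intro prod.cong) (auto simp: lookup_single when_def)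
  then show ?thesis by simp
qed

lemma monx_single1'[simp]: "monx x (Poly_Mapping.single i (Suc 0)) = x i"
  using monx_single1[of x i] by simp

lemma Const_0[simp]: "Const 0 = 0" by (simp add: Const_def)
lemma Const_1[simp]: "Const 1 = 1" by (simp add: Const_def)
lemma Const_add: "Const (a + b) = Const a + Const b" by (simp add: Const_def single_add)
lemma Const_mult: "Const (a * b) = Const a * Const b" by (simp add: Const_def mult_single)
lemma Const_uminus: "Const (- a) = - Const a" by (simp add: Const_def single_uminus)
lemma Const_diff: "Const (a - b) = Const a - Const b" by (simp add: Const_def single_diff)
lemma lookup_Const: "Poly_Mapping.lookup (Const c) m = (if m = 0 then c else 0)"
  by (simp add: Const_def lookup_single when_def)
lemma smul_Const: "smul c f = Const c * f"
  by (simp add: smul_def Const_def mult_map_scale_conv_mult)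

lemma peval_ext: "peval f v = ext (\<lambda>a. a) (monx (\<lambda>i. v $ i)) f"
  by (simp add: peval_def ext_def monx_def)
lemma psubst_ext: "psubst \<sigma> f = ext Const (monx \<sigma>) f"
  by (simp add: psubst_def ext_def monx_def)

lemma peval_add: "peval (f + g) v = peval f v + peval g v"
  unfolding peval_ext by (rule ext_add) auto
lemma peval_zero[simp]: "peval 0 v = 0"
  unfolding peval_ext by simp
lemma peval_single: "peval (Poly_Mapping.single m c) v = c * monx (\<lambda>i. v $ i) m"
  unfolding peval_ext by (rule ext_single) auto
lemma peval_mult: "peval (f * g) v = peval f v * peval g v"
  unfolding peval_ext by (rule ext_mult) (auto simp: monx_add)
lemma peval_sum: "peval (\<Sum>i\<in>I. F i) v = (\<Sum>i\<in>I. peval (F i) v)"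
  unfolding peval_ext by (rule ext_sum) auto
lemma peval_prod: "peval (\<Prod>i\<in>I. F i) v = (\<Prod>i\<in>I. peval (F i) v)"
  unfolding peval_ext by (rule ext_prod) (auto simp: monx_add)
lemma peval_uminus: "peval (- f :: ('n::finite, 'a::comm_ring_1) mpoly) v = - peval f v"
  unfolding peval_ext by (rule ext_uminus) auto
lemma peval_diff: "peval (f - g :: ('n::finite, 'a::comm_ring_1) mpoly) v = peval f v - peval g v"
  unfolding peval_ext by (rule ext_diff) auto
lemma peval_Const[simp]: "peval (Const c) v = c"
  by (simp add: Const_def peval_single)
lemma peval_one[simp]: "peval 1 v = 1"
  using peval_Const[of 1 v] by simp
lemma peval_Var[simp]: "peval (Var i) v = v $ i"
  by (simp add: Var_def peval_single monx_single1)
lemma peval_power: "peval (f ^ k) v = peval f v ^ k"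
  by (induct k) (auto simp: peval_mult)
lemma peval_smul: "peval (smul c f) v = c * peval f v"
  by (simp add: smul_Const peval_mult)

lemma Const_hom: "Const 0 = 0" "\<And>a b. Const (a + b) = Const a + Const b"
   "\<And>a b. Const (a * b) = Const a * Const b" "Const 1 = 1"
  by (auto simp: Const_add Const_mult)

lemma psubst_add: "psubst \<sigma> (f + g) = psubst \<sigma> f + psubst \<sigma> g"
  unfolding psubst_ext by (rule ext_add) (auto simp: Const_hom)
lemma psubst_zero[simp]: "psubst \<sigma> 0 = 0"
  unfolding psubst_ext by simp
lemma psubst_single: "psubst \<sigma> (Poly_Mapping.single m c) = Const c * monx \<sigma> m"
  unfolding psubst_ext by (rule ext_single) auto
lemma psubst_mult: "psubst \<sigma> (f * g) = psubst \<sigma> f * psubst \<sigma> g"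
  unfolding psubst_ext by (rule ext_mult) (auto simp: monx_add Const_hom)
lemma psubst_sum: "psubst \<sigma> (\<Sum>i\<in>I. F i) = (\<Sum>i\<in>I. psubst \<sigma> (F i))"
  unfolding psubst_ext by (rule ext_sum) (auto simp: Const_hom)
lemma psubst_prod: "psubst \<sigma> (\<Prod>i\<in>I. F i) = (\<Prod>i\<in>I. psubst \<sigma> (F i))"
  unfolding psubst_ext by (rule ext_prod) (auto simp: monx_add Const_hom)
lemma psubst_uminus: "psubst \<sigma> (- f :: ('n::finite, 'a::comm_ring_1) mpoly) = - psubst \<sigma> f"
  unfolding psubst_ext by (rule ext_uminus) (auto simp: Const_hom)
lemma psubst_diff: "psubst \<sigma> (f - g :: ('n::finite, 'a::comm_ring_1) mpoly) = psubst \<sigma> f - psubst \<sigma> g"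
  unfolding psubst_ext by (rule ext_diff) (auto simp: Const_hom)
lemma psubst_Const[simp]: "psubst \<sigma> (Const c) = Const c"
  by (simp add: Const_def psubst_single)
lemma psubst_one[simp]: "psubst \<sigma> 1 = 1"
  using psubst_Const[of \<sigma> 1] by simp
lemma psubst_Var[simp]: "psubst \<sigma> (Var i) = \<sigma> i"
  by (simp add: Var_def psubst_single monx_single1)
lemma psubst_power: "psubst \<sigma> (f ^ k) = psubst \<sigma> f ^ k"
  by (induct k) (auto simp: psubst_mult)
lemma psubst_smul: "psubst \<sigma> (smul c f) = smul c (psubst \<sigma> f)"
  by (simp add: smul_Const psubst_mult)

lemma peval_monx: "peval (monx \<sigma> m) v = monx (\<lambda>i. peval (\<sigma> i) v) m"
  by (simp add: monx_def peval_prod peval_power)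
lemma psubst_monx: "psubst \<tau> (monx \<sigma> m) = monx (\<lambda>i. psubst \<tau> (\<sigma> i)) m"
  by (simp add: monx_def psubst_prod psubst_power)

lemma peval_psubst: "peval (psubst \<sigma> f) v = peval f (\<chi> i. peval (\<sigma> i) v)"
proof (induct f rule: pm_induct)
  case zero then show ?case by simp
next
  case (single m c) then show ?case by (simp add: psubst_single peval_mult peval_monx peval_single)
next
  case (add f g) then show ?case by (simp add: psubst_add peval_add)
qed

lemma psubst_psubst: "psubst \<tau> (psubst \<sigma> f) = psubst (\<lambda>i. psubst \<tau> (\<sigma> i)) f"
proof (induct f rule: pm_induct)
  case zero then show ?case by simp
next
  case (single m c) then show ?case by (simp add: psubst_single psubst_mult psubst_monx)
next
  case (add f g) then show ?case by (simp add: psubst_add)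
qed

lemma Var_power: "Var i ^ k = Poly_Mapping.single (Poly_Mapping.single i k) (1::'a::comm_semiring_1)"
  by (induct k) (auto simp: Var_def mult_single single_add[symmetric] mult.commute)

lemma prod_single: "finite I \<Longrightarrow> (\<Prod>i\<in>I. Poly_Mapping.single (g i) (1::'a::comm_semiring_1)) = Poly_Mapping.single (\<Sum>i\<in>I. g i) 1"
  by (induct I rule: finite_induct) (auto simp: mult_single)

lemma nat_pm_sum_single: "(m :: 'n::finite \<Rightarrow>\<^sub>0 nat) = (\<Sum>i\<in>UNIV. Poly_Mapping.single i (Poly_Mapping.lookup m i))"
  by (rule poly_mapping_eqI) (simp add: lookup_sum lookup_single when_def)

lemma monx_Var: "monx Var m = Poly_Mapping.single m (1::'a::comm_semiring_1)"
  unfolding monx_def Var_power by (subst prod_single) (auto simp: nat_pm_sum_single[symmetric])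

lemma psubst_Var_id: "psubst Var f = (f :: ('n::finite, 'a::comm_semiring_1) mpoly)"
proof (induct f rule: pm_induct)
  case zero then show ?case by simp
next
  case (single m c) then show ?case by (simp add: psubst_single monx_Var Const_def mult_single)
next
  case (add f g) then show ?case by (simp add: psubst_add)
qed

lemma mdeg_add: "mdeg (a + b) = mdeg a + mdeg b"
  by (simp add: mdeg_def lookup_add sum.distrib)
lemma mdeg_0[simp]: "mdeg 0 = 0"
  by (simp add: mdeg_def)
lemma mdeg_single: "mdeg (Poly_Mapping.single (i::'n::finite) k) = k"
proof -
  have "mdeg (Poly_Mapping.single i k) = (\<Sum>j\<in>UNIV. if j = i then k else 0)"
    unfolding mdeg_def by (intro sum.cong) (auto simp: lookup_single when_def)
  then show ?thesis by simp
qed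
lemma mdeg_eq_0: "mdeg (m::'n::finite \<Rightarrow>\<^sub>0 nat) = 0 \<longleftrightarrow> m = 0"
proof
  assume "mdeg m = 0"
  then have "\<forall>i. Poly_Mapping.lookup m i = 0" by (simp add: mdeg_def)
  then show "m = 0" by (intro poly_mapping_eqI) simp
qed simp
lemma lookup_le_mdeg: "Poly_Mapping.lookup m i \<le> mdeg (m::'n::finite \<Rightarrow>\<^sub>0 nat)"
  unfolding mdeg_def by (rule member_le_sum) auto

lemma Pdeg_iff: "f \<in> Pdeg d \<longleftrightarrow> (\<forall>m. Poly_Mapping.lookup f m \<noteq> 0 \<longrightarrow> mdeg m = d)"
  by (auto simp: Pdeg_def in_keys_iff)

lemma Pdeg_zero[simp]: "0 \<in> Pdeg d" by (simp add: Pdeg_def)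
lemma Pdeg_add: "f \<in> Pdeg d \<Longrightarrow> g \<in> Pdeg d \<Longrightarrow> f + g \<in> Pdeg d"
  using keys_add[of f g] by (auto simp: Pdeg_def)
lemma Pdeg_uminus: "(f::('n::finite,'a::ab_group_add) mpoly) \<in> Pdeg d \<Longrightarrow> - f \<in> Pdeg d"
  by (auto simp: Pdeg_iff)
lemma Pdeg_diff: "(f::('n::finite,'a::ab_group_add) mpoly) \<in> Pdeg d \<Longrightarrow> g \<in> Pdeg d \<Longrightarrow> f - g \<in> Pdeg d"
  using keys_diff[of f g] by (auto simp: Pdeg_def)
lemma Pdeg_sum: "(\<And>i. i \<in> I \<Longrightarrow> F i \<in> Pdeg d) \<Longrightarrow> (\<Sum>i\<in>I. F i) \<in> Pdeg d"
  by (induct I rule: infinite_finite_induct) (auto intro: Pdeg_add)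
lemma Pdeg_single: "Poly_Mapping.single m c \<in> Pdeg (mdeg m)"
  by (auto simp: Pdeg_iff lookup_single when_def)
lemma Pdeg_Const: "Const c \<in> Pdeg 0"
  by (simp add: Const_def Pdeg_single[of 0, simplified])
lemma Pdeg_Var: "(Var i :: ('n::finite,'a::{zero_neq_one}) mpoly) \<in> Pdeg 1"
  unfolding Var_def using Pdeg_single[of "Poly_Mapping.single i (1::nat)" "1::'a"] by (simp add: mdeg_single)
lemma Pdeg_mult: "(f::('n::finite,'a::semiring_0) mpoly) \<in> Pdeg a \<Longrightarrow> g \<in> Pdeg b \<Longrightarrow> f * g \<in> Pdeg (a + b)"
  unfolding Pdeg_def using keys_mult[of f g] by (auto simp: mdeg_add)
lemma Pdeg_one: "(1::('n::finite,'a::comm_semiring_1) mpoly) \<in> Pdeg 0"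
  using Pdeg_Const[of "1::'a"] by simp
lemma Pdeg_prod: "(\<And>i. i \<in> I \<Longrightarrow> F i \<in> Pdeg (e i)) \<Longrightarrow>
   (\<Prod>i\<in>I. F i :: ('n::finite,'a::comm_semiring_1) mpoly) \<in> Pdeg (\<Sum>i\<in>I. e i)"
  by (induct I rule: infinite_finite_induct) (auto intro: Pdeg_mult Pdeg_one)
lemma Pdeg_power:
  assumes "(f::('n::finite,'a::comm_semiring_1) mpoly) \<in> Pdeg a"
  shows "f ^ k \<in> Pdeg (k * a)"
proof (induct k)
  case 0 show ?case using Pdeg_one by simp
next
  case (Suc k) then show ?case using Pdeg_mult[OF assms Suc] by simp
qed
lemma Pdeg_smul: "(f::('n::finite,'a::comm_semiring_1) mpoly) \<in> Pdeg d \<Longrightarrow> smul c f \<in> Pdeg d"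
  using Pdeg_mult[OF Pdeg_Const] by (simp add: smul_Const)
lemma Pdeg_Const_mult: "(f::('n::finite,'a::comm_semiring_1) mpoly) \<in> Pdeg d \<Longrightarrow> Const c * f \<in> Pdeg d"
  using Pdeg_mult[OF Pdeg_Const] by simp

lemma monx_Pdeg:
  assumes "\<And>i. \<sigma> i \<in> Pdeg 1"
  shows "monx \<sigma> m \<in> Pdeg (mdeg m :: nat)"
proof -
  have "monx \<sigma> m \<in> Pdeg (\<Sum>i\<in>UNIV. Poly_Mapping.lookup m i * 1)"
    unfolding monx_def by (rule Pdeg_prod) (intro Pdeg_power assms)
  then show ?thesis by (simp add: mdeg_def)
qed

lemma psubst_Pdeg:
  assumes "\<And>i. \<sigma> i \<in> Pdeg 1" and f: "f \<in> Pdeg d"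
  shows "psubst \<sigma> (f::('n::finite,'a::comm_semiring_1) mpoly) \<in> Pdeg d"
proof -
  have "psubst \<sigma> f = psubst \<sigma> (\<Sum>m\<in>Poly_Mapping.keys f. Poly_Mapping.single m (Poly_Mapping.lookup f m))"
    by (subst mpoly_eq_sum_single[of f]) (rule refl)
  also have "\<dots> = (\<Sum>m\<in>Poly_Mapping.keys f. Const (Poly_Mapping.lookup f m) * monx \<sigma> m)"
    by (simp add: psubst_sum psubst_single)
  also have "\<dots> \<in> Pdeg d"
  proof (rule Pdeg_sum)
    fix m assume "m \<in> Poly_Mapping.keys f"
    then have "mdeg m = d" using f by (auto simp: Pdeg_def)
    then have "monx \<sigma> m \<in> Pdeg d" using monx_Pdeg[of \<sigma> m] assms(1) by simp
    then show "Const (Poly_Mapping.lookup f m) * monx \<sigma> m \<in> Pdeg d"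
      by (rule Pdeg_Const_mult)
  qed
  finally show ?thesis .
qed

lemma Const_inj[simp]: "Const a = Const b \<longleftrightarrow> a = b"
  by (auto simp: Const_def dest: arg_cong[where f="\<lambda>p. Poly_Mapping.lookup p 0"])

lemma lookup_hcomp: "Poly_Mapping.lookup (hcomp j f) m = (if mdeg m = j then Poly_Mapping.lookup f m else 0)"
proof -
  have "finite {m. (if mdeg m = j then Poly_Mapping.lookup f m else 0) \<noteq> 0}"
    by (rule finite_subset[of _ "Poly_Mapping.keys f"]) (auto simp: in_keys_iff)
  then show ?thesis by (simp add: hcomp_def)
qed

lemma hcomp_Pdeg: "hcomp j f \<in> Pdeg j"
  by (simp add: Pdeg_iff lookup_hcomp)
lemma hcomp_add: "hcomp j (f + g) = hcomp j f + hcomp j g"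
  by (rule poly_mapping_eqI) (simp add: lookup_hcomp lookup_add)
lemma hcomp_zero[simp]: "hcomp j 0 = 0"
  by (rule poly_mapping_eqI) (simp add: lookup_hcomp)
lemma hcomp_uminus: "hcomp j (- f) = - hcomp j (f::('n::finite,'a::ab_group_add) mpoly)"
  by (rule poly_mapping_eqI) (simp add: lookup_hcomp)
lemma hcomp_diff: "hcomp j (f - g) = hcomp j f - hcomp j (g::('n::finite,'a::ab_group_add) mpoly)"
  by (rule poly_mapping_eqI) (simp add: lookup_hcomp lookup_minus)
lemma hcomp_sum: "hcomp j (\<Sum>i\<in>I. F i) = (\<Sum>i\<in>I. hcomp j (F i))"
  by (induct I rule: infinite_finite_induct) (auto simp: hcomp_add)
lemma hcomp_of_Pdeg: "f \<in> Pdeg d \<Longrightarrow> hcomp j f = (if j = d then f else 0)"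
  by (rule poly_mapping_eqI) (auto simp: lookup_hcomp Pdeg_iff)
lemma hcomp_hcomp: "hcomp j (hcomp d f) = (if j = d then hcomp d f else 0)"
  by (rule hcomp_of_Pdeg[OF hcomp_Pdeg])

lemma hcomp_decomp:
  assumes "finite D" "mdeg ` Poly_Mapping.keys f \<subseteq> D"
  shows "f = (\<Sum>j\<in>D. hcomp j f)"
proof (rule poly_mapping_eqI)
  fix m
  have "Poly_Mapping.lookup (\<Sum>j\<in>D. hcomp j f) m = (\<Sum>j\<in>D. if mdeg m = j then Poly_Mapping.lookup f m else 0)"
    by (simp add: lookup_sum lookup_hcomp)
  also have "\<dots> = Poly_Mapping.lookup f m"
    using assms by (cases "m \<in> Poly_Mapping.keys f") (auto simp: in_keys_iff)
  finally show "Poly_Mapping.lookup f m = Poly_Mapping.lookup (\<Sum>j\<in>D. hcomp j f) m" by simp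
qed

lemma hcomp_outside: "j \<notin> mdeg ` Poly_Mapping.keys f \<Longrightarrow> hcomp j f = 0"
  by (rule poly_mapping_eqI) (auto simp: lookup_hcomp in_keys_iff)

lemma additive_sum:
  fixes T :: "'x::comm_monoid_add \<Rightarrow> 'y::comm_monoid_add"
  assumes "\<And>f g. T (f + g) = T f + T g" "T 0 = 0"
  shows "T (\<Sum>i\<in>I. F i) = (\<Sum>i\<in>I. T (F i))"
  by (induct I rule: infinite_finite_induct) (auto simp: assms)

lemma hcomp_commute:
  fixes T :: "('n::finite,'a::comm_monoid_add) mpoly \<Rightarrow> ('n,'b::comm_monoid_add) mpoly"
  assumes add: "\<And>f g. T (f + g) = T f + T g" and z: "T 0 = 0"
    and deg: "\<And>f d. f \<in> Pdeg d \<Longrightarrow> T f \<in> Pdeg d"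
  shows "hcomp j (T f) = T (hcomp j f)"
proof -
  let ?D = "mdeg ` Poly_Mapping.keys f"
  have "T f = (\<Sum>d\<in>?D. T (hcomp d f))"
    by (subst hcomp_decomp[of ?D f]) (auto simp: additive_sum[of T, OF add z])
  then have "hcomp j (T f) = (\<Sum>d\<in>?D. hcomp j (T (hcomp d f)))"
    by (simp add: hcomp_sum)
  also have "\<dots> = (\<Sum>d\<in>?D. if j = d then T (hcomp d f) else 0)"
    by (intro sum.cong refl hcomp_of_Pdeg deg hcomp_Pdeg)
  also have "\<dots> = T (hcomp j f)"
    using hcomp_outside[of j f] z by auto
  finally show ?thesis .
qed

lemma hcomp_mult:
  fixes f g :: "('n::finite,'a::comm_semiring_1) mpoly"
  assumes "finite D" "mdeg ` Poly_Mapping.keys f \<subseteq> D" "mdeg ` Poly_Mapping.keys g \<subseteq> D"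
  shows "hcomp j (f * g) = (\<Sum>a\<in>D. \<Sum>b\<in>D. if a + b = j then hcomp a f * hcomp b g else 0)"
proof -
  have "f * g = (\<Sum>a\<in>D. hcomp a f) * (\<Sum>b\<in>D. hcomp b g)"
    using hcomp_decomp[OF assms(1,2)] hcomp_decomp[OF assms(1,3)] by simp
  also have "\<dots> = (\<Sum>a\<in>D. \<Sum>b\<in>D. hcomp a f * hcomp b g)"
    by (simp add: sum_product)
  finally have "hcomp j (f * g) = (\<Sum>a\<in>D. \<Sum>b\<in>D. hcomp j (hcomp a f * hcomp b g))"
    by (simp add: hcomp_sum)
  also have "\<dots> = (\<Sum>a\<in>D. \<Sum>b\<in>D. if a + b = j then hcomp a f * hcomp b g else 0)"
    by (intro sum.cong refl) (auto simp: hcomp_of_Pdeg[OF Pdeg_mult[OF hcomp_Pdeg hcomp_Pdeg]])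
  finally show ?thesis .
qed

lemma hcomp_0_Const: "hcomp 0 f = Const (Poly_Mapping.lookup f 0)"
  by (rule poly_mapping_eqI) (auto simp: lookup_hcomp lookup_Const mdeg_eq_0)

lemma hcomp_mult_Pdeg:
  fixes h g :: "('n::finite,'a::comm_semiring_1) mpoly"
  assumes g: "g \<in> Pdeg d"
  shows "hcomp d (h * g) = Const (Poly_Mapping.lookup h 0) * g"
proof -
  let ?D = "insert 0 (insert d (mdeg ` Poly_Mapping.keys h \<union> mdeg ` Poly_Mapping.keys g))"
  have fD: "finite ?D" by auto
  have "hcomp d (h * g) = (\<Sum>a\<in>?D. \<Sum>b\<in>?D. if a + b = d then hcomp a h * hcomp b g else 0)"
    by (rule hcomp_mult) auto
  also have "\<dots> = (\<Sum>a\<in>?D. \<Sum>b\<in>?D. if b = d then (if a = 0 then hcomp a h * g else 0) else 0)"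
    by (intro sum.cong refl) (auto simp: hcomp_of_Pdeg[OF g])
  also have "\<dots> = hcomp 0 h * g"
    using fD by (simp add: sum.delta)
  finally show ?thesis by (simp add: hcomp_0_Const)
qed

lemma lookup_mult_0:
  fixes f g :: "('n::finite,'a::comm_semiring_1) mpoly"
  shows "Poly_Mapping.lookup (f * g) 0 = Poly_Mapping.lookup f 0 * Poly_Mapping.lookup g 0"
proof -
  have "hcomp 0 (f * hcomp 0 g) = Const (Poly_Mapping.lookup f 0) * hcomp 0 g"
    by (rule hcomp_mult_Pdeg[OF hcomp_Pdeg])
  moreover have "Poly_Mapping.lookup (f * g) 0 = Poly_Mapping.lookup (hcomp 0 (f * g)) 0"
    by (simp add: lookup_hcomp)
  moreover have "hcomp 0 (f * g) = hcomp 0 (f * hcomp 0 g)"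
  proof -
    let ?D = "insert 0 (mdeg ` Poly_Mapping.keys f \<union> mdeg ` Poly_Mapping.keys g)"
    have a: "hcomp 0 (f * g) = (\<Sum>a\<in>?D. \<Sum>b\<in>?D. if a + b = 0 then hcomp a f * hcomp b g else 0)"
      by (rule hcomp_mult) auto
    have b: "hcomp 0 (f * hcomp 0 g) = (\<Sum>a\<in>?D. \<Sum>b\<in>?D. if a + b = 0 then hcomp a f * hcomp b (hcomp 0 g) else 0)"
      by (rule hcomp_mult) (auto simp: lookup_hcomp in_keys_iff split: if_splits)
    show ?thesis unfolding a b
      by (intro sum.cong refl) (auto simp: hcomp_hcomp)
  qed
  ultimately have "Poly_Mapping.lookup (f * g) 0 = Poly_Mapping.lookup (Const (Poly_Mapping.lookup f 0) * hcomp 0 g) 0"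
    by simp
  then show ?thesis
    by (simp add: hcomp_0_Const Const_mult[symmetric] lookup_Const)
qed

lemma peval_homog:
  fixes f :: "('n::finite,'a::comm_semiring_1) mpoly"
  assumes "f \<in> Pdeg d"
  shows "peval f (c *s v) = c ^ d * peval f v"
proof -
  have "peval f (c *s v) = (\<Sum>m\<in>Poly_Mapping.keys f. Poly_Mapping.lookup f m * (c ^ d * (\<Prod>i\<in>UNIV. (v $ i) ^ Poly_Mapping.lookup m i)))"
    unfolding peval_def
  proof (intro sum.cong refl)
    fix m assume m: "m \<in> Poly_Mapping.keys f"
    then have "mdeg m = d" using assms by (auto simp: Pdeg_def)
    then have "(\<Prod>i\<in>UNIV. ((c *s v) $ i) ^ Poly_Mapping.lookup m i) = c ^ d * (\<Prod>i\<in>UNIV. (v $ i) ^ Poly_Mapping.lookup m i)"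
      by (simp add: power_mult_distrib prod.distrib mdeg_def power_sum[symmetric])
    then show "Poly_Mapping.lookup f m * (\<Prod>i\<in>UNIV. ((c *s v) $ i) ^ Poly_Mapping.lookup m i) =
      Poly_Mapping.lookup f m * (c ^ d * (\<Prod>i\<in>UNIV. (v $ i) ^ Poly_Mapping.lookup m i))" by simp
  qed
  also have "\<dots> = c ^ d * peval f v"
    by (simp add: peval_def sum_distrib_left mult_ac)
  finally show ?thesis .
qed

definition sig :: "'a::field^'n^'n \<Rightarrow> 'n::finite \<Rightarrow> ('n, 'a) mpoly" where
  "sig B i = (\<Sum>j\<in>UNIV. Const (B $ i $ j) * Var j)"

lemma lamA_sig: "lamA A f = psubst (sig (matrix_inv A)) f"
  by (simp add: lamA_def sig_def[abs_def])

lemma sig_Pdeg: "sig B i \<in> Pdeg 1"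
  unfolding sig_def by (intro Pdeg_sum Pdeg_Const_mult Pdeg_Var)

lemma peval_sig: "peval (sig B i) v = (B *v v) $ i"
  by (simp add: sig_def peval_sum peval_mult matrix_vector_mult_def)

lemma Const_sum: "Const (\<Sum>i\<in>I. f i) = (\<Sum>i\<in>I. Const (f i))"
  by (induct I rule: infinite_finite_induct) (auto simp: Const_add)

lemma psubst_sig_sig: "psubst (sig B) (sig C i) = sig (C ** B) i"
proof -
  have "psubst (sig B) (sig C i) = (\<Sum>j\<in>UNIV. Const (C $ i $ j) * (\<Sum>k\<in>UNIV. Const (B $ j $ k) * Var k))"
    by (simp add: sig_def psubst_sum psubst_mult)
  also have "\<dots> = (\<Sum>j\<in>UNIV. \<Sum>k\<in>UNIV. Const (C $ i $ j * B $ j $ k) * Var k)"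
    by (simp add: sum_distrib_left Const_mult mult_ac)
  also have "\<dots> = (\<Sum>k\<in>UNIV. \<Sum>j\<in>UNIV. Const (C $ i $ j * B $ j $ k) * Var k)"
    by (rule sum.swap)
  also have "\<dots> = sig (C ** B) i"
    by (simp add: sig_def matrix_matrix_mult_def sum_distrib_right[symmetric] Const_sum)
  finally show ?thesis .
qed

lemma sig_mat1: "sig (mat 1) i = Var i"
proof -
  have "sig (mat 1) i = (\<Sum>j\<in>UNIV. if i = j then Var j else 0)"
    unfolding sig_def by (intro sum.cong) (auto simp: mat_def)
  then show ?thesis by simp
qed

lemma minv:
  assumes "invertible A"
  shows "A ** matrix_inv A = mat 1" "matrix_inv A ** A = mat 1"
proof -
  have "\<exists>A'. A ** A' = mat 1 \<and> A' ** A = mat 1" using assms by (simp add: invertible_def)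
  then have "A ** matrix_inv A = mat 1 \<and> matrix_inv A ** A = mat 1"
    unfolding matrix_inv_def by (rule someI_ex)
  then show "A ** matrix_inv A = mat 1" "matrix_inv A ** A = mat 1" by auto
qed

lemma invertible_minv: "invertible A \<Longrightarrow> invertible (matrix_inv A)"
  using minv unfolding invertible_def by blast

lemma minv_minv:
  assumes "invertible A"
  shows "matrix_inv (matrix_inv A) = A"
proof -
  let ?B = "matrix_inv A" let ?C = "matrix_inv ?B"
  have "?C = ?C ** (?B ** A)" using minv(2)[OF assms] by simp
  also have "\<dots> = (?C ** ?B) ** A" by (simp add: matrix_mul_assoc)
  also have "\<dots> = A" using minv(2)[OF invertible_minv[OF assms]] by simp
  finally show ?thesis .
qed

lemma lamA_lamA_gen: "lamA B (lamA C f) = psubst (sig (matrix_inv C ** matrix_inv B)) f"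
  by (simp add: lamA_sig psubst_psubst psubst_sig_sig)

lemma lamA_inv1: "invertible A \<Longrightarrow> lamA A (lamA (matrix_inv A) f) = f"
  by (simp add: lamA_lamA_gen minv_minv minv sig_mat1[abs_def] psubst_Var_id)
lemma lamA_inv2: "invertible A \<Longrightarrow> lamA (matrix_inv A) (lamA A f) = f"
  by (simp add: lamA_lamA_gen minv_minv minv sig_mat1[abs_def] psubst_Var_id)

lemma lamA_add: "lamA A (f + g) = lamA A f + lamA A g" by (simp add: lamA_sig psubst_add)
lemma lamA_zero[simp]: "lamA A 0 = 0" by (simp add: lamA_sig)
lemma lamA_mult: "lamA A (f * g) = lamA A f * lamA A g" by (simp add: lamA_sig psubst_mult)
lemma lamA_diff: "lamA A (f - g) = lamA A f - lamA A g" by (simp add: lamA_sig psubst_diff)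
lemma lamA_uminus: "lamA A (- f) = - lamA A f" by (simp add: lamA_sig psubst_uminus)
lemma lamA_sum: "lamA A (\<Sum>i\<in>I. F i) = (\<Sum>i\<in>I. lamA A (F i))" by (simp add: lamA_sig psubst_sum)
lemma lamA_Const[simp]: "lamA A (Const c) = Const c" by (simp add: lamA_sig)
lemma lamA_one[simp]: "lamA A 1 = 1" by (simp add: lamA_sig)
lemma lamA_power: "lamA A (f ^ k) = lamA A f ^ k" by (simp add: lamA_sig psubst_power)
lemma lamA_smul: "lamA A (smul c f) = smul c (lamA A f)" by (simp add: lamA_sig psubst_smul)
lemma lamA_Pdeg: "f \<in> Pdeg d \<Longrightarrow> lamA A f \<in> Pdeg d"
  unfolding lamA_sig by (rule psubst_Pdeg[OF sig_Pdeg])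
lemma lamA_hcomp: "hcomp j (lamA A f) = lamA A (hcomp j f)"
  by (rule hcomp_commute) (auto simp: lamA_add lamA_Pdeg)
lemma peval_lamA: "peval (lamA A f) v = peval f (matrix_inv A *v v)"
proof -
  have "(\<chi> i. peval (sig (matrix_inv A) i) v) = matrix_inv A *v v"
    by (simp add: peval_sig)
  then show ?thesis by (simp add: lamA_sig peval_psubst)
qed

lemma minv_mult_vec: "invertible A \<Longrightarrow> matrix_inv A *v (A *v v) = v"
  by (simp add: matrix_vector_mul_assoc minv)
lemma mult_minv_vec: "invertible A \<Longrightarrow> A *v (matrix_inv A *v v) = v"
  by (simp add: matrix_vector_mul_assoc minv)

lemma peval_lamA_at: "invertible A \<Longrightarrow> peval (lamA A f) (A *v v) = peval f v"
  by (simp add: peval_lamA minv_mult_vec)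

lemma LamA_proj: "LamA A (proj_pt v) = proj_pt (A *v v)"
  unfolding LamA_def proj_pt_def
  apply (rule set_eqI)
  apply (auto simp: vector_scalar_commute)
  subgoal for c by (rule image_eqI[of _ _ "c *s v"]) (auto simp: vector_scalar_commute)
  done

lemma is_ppoint_LamA:
  assumes "invertible A" "is_ppoint p"
  shows "is_ppoint (LamA A p)"
proof -
  obtain v where v: "v \<noteq> 0" "p = proj_pt v" using assms(2) by (auto simp: is_ppoint_def)
  have "A *v v \<noteq> 0"
  proof
    assume "A *v v = 0"
    then have "matrix_inv A *v (A *v v) = 0" by simp
    then show False using v minv_mult_vec[OF assms(1)] by simp
  qed
  then show ?thesis using v by (auto simp: is_ppoint_def LamA_proj)
qed

lemma LamA_inv2: "invertible A \<Longrightarrow> LamA (matrix_inv A) (LamA A p) = p"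
  unfolding LamA_def by (simp add: image_image minv_mult_vec)

definition good :: "('n::finite, 'a::field) mpoly \<Rightarrow> ('a^'n) set \<Rightarrow> bool" where
  "good L p \<longleftrightarrow> is_ppoint p \<and> L \<in> Pdeg 1 \<and> (\<forall>v\<in>p. peval L v \<noteq> 0)"

lemma proj_pt_mem: "v \<in> proj_pt v"
  unfolding proj_pt_def by (rule CollectI, rule exI[of _ 1]) simp

lemma good_nrep:
  assumes "good L p"
  shows "nrep L p \<in> p" "peval L (nrep L p) = 1"
    "\<And>w. w \<in> p \<Longrightarrow> peval L w = 1 \<Longrightarrow> w = nrep L p"
    "\<And>w. w \<in> p \<Longrightarrow> \<exists>c. c \<noteq> 0 \<and> w = c *s nrep L p"
proof -
  obtain v where v: "v \<noteq> 0" "p = proj_pt v" using assms by (auto simp: good_def is_ppoint_def)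
  have L1: "L \<in> Pdeg 1" using assms by (simp add: good_def)
  have hom: "\<And>c w. peval L (c *s w) = c * peval L w" using peval_homog[OF L1] by simp
  define a where "a = peval L v"
  have "v \<in> p" using v proj_pt_mem[of v] by simp
  then have a: "a \<noteq> 0" using assms unfolding good_def a_def by blast
  define w0 where "w0 = inverse a *s v"
  have w0p: "w0 \<in> p" using a v by (auto simp: w0_def proj_pt_def)
  have w0L: "peval L w0 = 1" using a by (simp add: w0_def hom a_def[symmetric])
  have uniq: "w = w0" if wp: "w \<in> p" "peval L w = 1" for w
  proof -
    obtain c where c: "w = c *s v" using wp v by (auto simp: proj_pt_def)
    then have "c * a = 1" using wp by (simp add: hom a_def)
    then have "c = inverse a" using a by (simp add: field_simps)
    then show ?thesis using c by (simp add: w0_def)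
  qed
  have n: "nrep L p = w0"
    unfolding nrep_def by (rule the_equality) (simp add: w0p w0L, blast intro: uniq)
  show "nrep L p \<in> p" "peval L (nrep L p) = 1" using n w0p w0L by auto
  show "\<And>w. w \<in> p \<Longrightarrow> peval L w = 1 \<Longrightarrow> w = nrep L p" using uniq n by auto
  show "\<exists>c. c \<noteq> 0 \<and> w = c *s nrep L p" if wp: "w \<in> p" for w
  proof -
    obtain c where c: "c \<noteq> 0" "w = c *s v" using wp v by (auto simp: proj_pt_def)
    have "w = (c * a) *s w0" using a c by (simp add: w0_def)
    then have "w = (c * a) *s nrep L p" using n by simp
    moreover have "c * a \<noteq> 0" using a c by simp
    ultimately show ?thesis by blast
  qed
qed

lemma good_LamA:
  assumes "invertible A" "good L p"
  shows "good (lamA A L) (LamA A p)"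
proof -
  have "is_ppoint (LamA A p)" using assms is_ppoint_LamA[OF assms(1)] by (simp add: good_def)
  moreover have "lamA A L \<in> Pdeg 1" using assms by (simp add: good_def lamA_Pdeg)
  moreover have "\<forall>v\<in>LamA A p. peval (lamA A L) v \<noteq> 0"
    using assms unfolding LamA_def good_def by (auto simp: peval_lamA_at)
  ultimately show ?thesis by (simp add: good_def)
qed

lemma nrep_LamA:
  assumes "invertible A" "good L p"
  shows "nrep (lamA A L) (LamA A p) = A *v nrep L p"
proof -
  have g: "good (lamA A L) (LamA A p)" by (rule good_LamA[OF assms])
  have "A *v nrep L p \<in> LamA A p" using good_nrep(1)[OF assms(2)] by (auto simp: LamA_def)
  moreover have "peval (lamA A L) (A *v nrep L p) = 1"
    using good_nrep(2)[OF assms(2)] by (simp add: peval_lamA_at[OF assms(1)])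
  ultimately show ?thesis by (rule sym[OF good_nrep(3)[OF g]])
qed

lemma vanI_zero[simp]: "0 \<in> vanI X" by (simp add: vanI_def)
lemma vanI_add: "f \<in> vanI X \<Longrightarrow> g \<in> vanI X \<Longrightarrow> f + g \<in> vanI X"
  by (simp add: vanI_def hcomp_add peval_add)
lemma vanI_uminus: "f \<in> vanI X \<Longrightarrow> - f \<in> vanI X"
  by (simp add: vanI_def hcomp_uminus peval_uminus)
lemma vanI_diff: "f \<in> vanI X \<Longrightarrow> g \<in> vanI X \<Longrightarrow> f - g \<in> vanI X"
  by (simp add: vanI_def hcomp_diff peval_diff)
lemma vanI_sum: "(\<And>i. i \<in> I \<Longrightarrow> F i \<in> vanI X) \<Longrightarrow> (\<Sum>i\<in>I. F i) \<in> vanI X"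
  by (induct I rule: infinite_finite_induct) (auto intro: vanI_add)

lemma vanI_mult:
  assumes f: "f \<in> vanI X"
  shows "f * g \<in> vanI X"
  unfolding vanI_def mem_Collect_eq
proof (intro allI ballI)
  fix j p v assume p: "p \<in> X" and v: "v \<in> p"
  let ?D = "mdeg ` Poly_Mapping.keys f \<union> mdeg ` Poly_Mapping.keys g"
  have "hcomp j (f * g) = (\<Sum>a\<in>?D. \<Sum>b\<in>?D. if a + b = j then hcomp a f * hcomp b g else 0)"
    by (rule hcomp_mult) auto
  moreover have "peval (hcomp a f) v = 0" for a using f p v by (auto simp: vanI_def)
  then have "peval (if a + b = j then hcomp a f * hcomp b g else 0) v = 0" for a b
    by (simp add: peval_mult)
  ultimately show "peval (hcomp j (f * g)) v = 0"
    by (simp add: peval_sum)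
qed

lemma vanI_mult2: "g \<in> vanI X \<Longrightarrow> f * g \<in> vanI X"
  using vanI_mult[of g X f] by (simp add: mult.commute)

lemma vanI_smul: "f \<in> vanI X \<Longrightarrow> smul c f \<in> vanI X"
  by (simp add: smul_Const vanI_mult2)

lemma cong_mult:
  assumes "a - a' \<in> vanI X" "b - b' \<in> vanI X"
  shows "a * b - a' * b' \<in> vanI X"
proof -
  have "a * b - a' * b' = (a - a') * b + a' * (b - b')" by (simp add: algebra_simps)
  then show ?thesis using assms by (simp add: vanI_add vanI_mult vanI_mult2)
qed

lemma cong_sum:
  assumes "\<And>i. i \<in> I \<Longrightarrow> F i - G i \<in> vanI X"
  shows "(\<Sum>i\<in>I. F i) - (\<Sum>i\<in>I. G i) \<in> vanI X"
  using vanI_sum[of I "\<lambda>i. F i - G i" X] assms by (simp add: sum_subtractf)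

lemma cong_trans: "a - b \<in> vanI X \<Longrightarrow> b - c \<in> vanI X \<Longrightarrow> a - c \<in> vanI X"
  using vanI_add[of "a - b" X "b - c"] by simp

lemma cong_sym: "a - b \<in> vanI X \<Longrightarrow> b - a \<in> vanI X"
  using vanI_uminus[of "a - b" X] by simp

lemma vanI_Pdeg_iff:
  assumes X: "\<forall>p\<in>X. good L p" and f: "f \<in> Pdeg d"
  shows "f \<in> vanI X \<longleftrightarrow> (\<forall>p\<in>X. peval f (nrep L p) = 0)"
proof
  assume "f \<in> vanI X"
  then have "peval (hcomp d f) (nrep L p) = 0" if "p \<in> X" for p
    using good_nrep(1) X that unfolding vanI_def by blast
  then show "\<forall>p\<in>X. peval f (nrep L p) = 0" using hcomp_of_Pdeg[OF f, of d] by simp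
next
  assume z: "\<forall>p\<in>X. peval f (nrep L p) = 0"
  show "f \<in> vanI X" unfolding vanI_def mem_Collect_eq
  proof (intro allI ballI)
    fix j p v assume p: "p \<in> X" and v: "v \<in> p"
    obtain c where "v = c *s nrep L p" using good_nrep(4)[OF bspec[OF X p] v] by blast
    then have "peval f v = 0" using z p peval_homog[OF f] by simp
    then show "peval (hcomp j f) v = 0" by (simp add: hcomp_of_Pdeg[OF f])
  qed
qed

lemma lamA_vanI:
  assumes A: "invertible A" and f: "f \<in> vanI X"
  shows "lamA A f \<in> vanI (LamA A ` X)"
  unfolding vanI_def mem_Collect_eq
proof (intro allI ballI)
  fix j p' v' assume "p' \<in> LamA A ` X" "v' \<in> p'"
  then obtain p v where p: "p \<in> X" and v: "v \<in> p" and v': "v' = A *v v"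
    by (auto simp: LamA_def)
  have "peval (hcomp j (lamA A f)) v' = peval (hcomp j f) v"
    by (simp add: lamA_hcomp v' peval_lamA_at[OF A])
  then show "peval (hcomp j (lamA A f)) v' = 0" using f p v by (simp add: vanI_def)
qed

lemma LamA_image_inv: "invertible A \<Longrightarrow> LamA (matrix_inv A) ` (LamA A ` X) = X"
  by (simp add: image_image LamA_inv2)

lemma lamA_vanI_iff:
  assumes A: "invertible A"
  shows "lamA A f \<in> vanI (LamA A ` X) \<longleftrightarrow> f \<in> vanI X"
  using lamA_vanI[OF A, of f X] lamA_vanI[OF invertible_minv[OF A], of "lamA A f" "LamA A ` X"]
  by (auto simp: lamA_inv2[OF A] LamA_image_inv[OF A])

interpretation mpvs: vector_space "smul :: 'a::field \<Rightarrow> ('n, 'a) mpoly \<Rightarrow> ('n, 'a) mpoly"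
  by unfold_locales (simp_all add: smul_Const Const_add Const_mult algebra_simps)

lemma hf_mpvs:
  fixes X :: "('a::{field,finite}^'n::finite) set set"
  shows "hf X i = mpvs.dim (Pdeg i :: ('n,'a) mpoly set) - mpvs.dim (Pdeg i \<inter> vanI X)"
  by (simp add: hf_def)

lemma mp_module: "module (smul :: 'a::field \<Rightarrow> ('n, 'a) mpoly \<Rightarrow> ('n, 'a) mpoly)"
  by unfold_locales (simp_all add: smul_Const Const_add Const_mult algebra_simps)

lemma mp_hom:
  fixes T :: "('n, 'a::field) mpoly \<Rightarrow> ('m, 'a) mpoly"
  assumes "\<And>f g. T (f + g) = T f + T g" "\<And>c f. T (smul c f) = smul c (T f)"
  shows "module_hom smul smul T"
  using assms mp_module mp_module by (simp add: module_hom_iff)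

lemma dim_image_inj:
  fixes T :: "('n, 'a::field) mpoly \<Rightarrow> ('n, 'a) mpoly"
  assumes add: "\<And>f g. T (f + g) = T f + T g" and sc: "\<And>c f. T (smul c f) = smul c (T f)"
    and inj: "inj T"
  shows "mpvs.dim (T ` V) = mpvs.dim V"
proof -
  interpret h: module_hom smul smul T by (rule mp_hom[OF add sc])
  obtain B where B: "B \<subseteq> V" "mpvs.independent B" "V \<subseteq> mpvs.span B" "card B = mpvs.dim V"
    by (rule mpvs.basis_exists)
  have 1: "T ` B \<subseteq> T ` V" using B by auto
  have 2: "mpvs.independent (T ` B)" by (rule h.independent_inj_image[OF B(2) inj])
  have 3: "T ` V \<subseteq> mpvs.span (T ` B)" by (rule h.spans_image[OF B(3)])
  have "card (T ` B) = mpvs.dim (T ` V)" by (rule mpvs.basis_card_eq_dim[OF 1 3 2])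
  moreover have "card (T ` B) = card B" using inj by (simp add: card_image inj_on_subset)
  ultimately show ?thesis using B by simp
qed

lemma hf_LamA:
  fixes X :: "('a::{field,finite}^'n::finite) set set"
  assumes A: "invertible A"
  shows "hf (LamA A ` X) i = hf X i"
proof -
  have inj: "inj (lamA A)" by (metis injI lamA_inv2[OF A])
  have "lamA A ` (Pdeg i \<inter> vanI X) = Pdeg i \<inter> vanI (LamA A ` X)"
  proof
    show "lamA A ` (Pdeg i \<inter> vanI X) \<subseteq> Pdeg i \<inter> vanI (LamA A ` X)"
      using lamA_Pdeg lamA_vanI[OF A] by auto
    show "Pdeg i \<inter> vanI (LamA A ` X) \<subseteq> lamA A ` (Pdeg i \<inter> vanI X)"
    proof
      fix g assume g: "g \<in> Pdeg i \<inter> vanI (LamA A ` X)"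
      let ?h = "lamA (matrix_inv A) g"
      have "lamA A ?h = g" by (rule lamA_inv1[OF A])
      moreover have "?h \<in> Pdeg i" using g lamA_Pdeg by auto
      moreover have "?h \<in> vanI X" using g lamA_vanI_iff[OF A, of ?h X] \<open>lamA A ?h = g\<close> by auto
      ultimately show "g \<in> lamA A ` (Pdeg i \<inter> vanI X)" by (metis IntI image_eqI)
    qed
  qed
  then have "mpvs.dim (Pdeg i \<inter> vanI (LamA A ` X)) = mpvs.dim (Pdeg i \<inter> vanI X)"
    using dim_image_inj[OF lamA_add lamA_smul inj, of "Pdeg i \<inter> vanI X"] by simp
  then show ?thesis by (simp add: hf_mpvs)
qed

lemma regidx_LamA:
  fixes X :: "('a::{field,finite}^'n::finite) set set"
  assumes A: "invertible A"
  shows "regidx (LamA A ` X) = regidx X"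
proof -
  have c: "card (LamA A ` X) = card X"
    by (rule card_image) (metis inj_onI LamA_inv2[OF A])
  show ?thesis unfolding regidx_def c hf_LamA[OF A] ..
qed

lemma sum_fun_apply: "(\<Sum>i\<in>I. F i) x = (\<Sum>i\<in>I. F i x :: 'b::comm_monoid_add)"
  by (induct I rule: infinite_finite_induct) auto

lemma f_module: "module (\<lambda>c (f::'x \<Rightarrow> 'a::field) x. c * f x)"
  by unfold_locales (auto simp: fun_eq_iff algebra_simps)

interpretation fvs: vector_space "(\<lambda>c (f::'x \<Rightarrow> 'a::field) x. c * f x)"
  by unfold_locales (auto simp: fun_eq_iff algebra_simps)

definition evm :: "('a::field^'n::finite) set set \<Rightarrow> ('n, 'a) mpoly \<Rightarrow> ('n, 'a) mpoly \<Rightarrow> ('a^'n) set \<Rightarrow> 'a" where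
  "evm X L f = (\<lambda>p. if p \<in> X then peval f (nrep L p) else 0)"

definition ee :: "'x \<Rightarrow> 'x \<Rightarrow> 'a::field" where
  "ee q = (\<lambda>p. if p = q then 1 else 0)"

lemma evm_hom: "module_hom smul (\<lambda>c (f::('a^'n) set \<Rightarrow> 'a) x. c * f x) (evm X (L :: ('n::finite, 'a::field) mpoly))"
  unfolding module_hom_iff using mp_module f_module
  by (auto simp: evm_def fun_eq_iff peval_add peval_smul)

lemma fvs_span_support:
  assumes "finite X" "\<And>x. x \<notin> X \<Longrightarrow> g x = (0::'a::field)"
  shows "g \<in> fvs.span (ee ` X)"
proof -
  have "g = (\<Sum>q\<in>X. (\<lambda>x. g q * ee q x))"
  proof
    fix x
    have "(\<Sum>q\<in>X. (\<lambda>x. g q * ee q x)) x = (\<Sum>q\<in>X. g q * ee q x)"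
      by (rule sum_fun_apply)
    also have "\<dots> = (\<Sum>q\<in>X. if x = q then g q else 0)"
      by (rule sum.cong) (auto simp: ee_def)
    also have "\<dots> = g x" using assms by (auto simp: sum.delta)
    finally show "g x = (\<Sum>q\<in>X. (\<lambda>x. g q * ee q x)) x" by simp
  qed
  also have "\<dots> \<in> fvs.span (ee ` X)"
  proof (rule fvs.span_sum)
    fix q assume q: "q \<in> X"
    show "(\<lambda>x. g q * ee q x) \<in> fvs.span (ee ` X)"
      using fvs.span_scale[OF fvs.span_base[of "ee q" "ee ` X"], of "g q"] q by simp
  qed
  finally show ?thesis .
qed

lemma ee_inj: "inj (ee :: 'x \<Rightarrow> 'x \<Rightarrow> 'a::field)"
proof (rule injI)
  fix a b :: 'x assume "(ee a :: 'x \<Rightarrow> 'a) = ee b"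
  then have "(ee a :: 'x \<Rightarrow> 'a) a = ee b a" by simp
  then show "a = b" by (auto simp: ee_def split: if_splits)
qed

lemma ee_indep:
  assumes "finite X"
  shows "fvs.independent (ee ` X :: ('x \<Rightarrow> 'a::field) set)"
proof (rule fvs.independent_if_scalars_zero)
  show "finite (ee ` X)" using assms by simp
  fix u :: "('x \<Rightarrow> 'a) \<Rightarrow> 'a" and e :: "'x \<Rightarrow> 'a"
  assume s: "(\<Sum>x\<in>ee ` X. (\<lambda>y. u x * x y)) = 0" and e: "e \<in> ee ` X"
  then obtain q where q: "q \<in> X" "e = ee q" by auto
  have "0 = (\<Sum>x\<in>ee ` X. (\<lambda>y. u x * x y)) q" using s by simp
  also have "\<dots> = (\<Sum>x\<in>X. u (ee x) * ee x q)"
    by (simp add: sum_fun_apply sum.reindex inj_on_subset[OF ee_inj])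
  also have "\<dots> = (\<Sum>x\<in>X. if x = q then u (ee x) else 0)"
    by (intro sum.cong) (auto simp: ee_def)
  also have "\<dots> = u e" using q assms by simp
  finally show "u e = 0" by simp
qed

lemma finite_mdeg: "finite {m :: 'n::finite \<Rightarrow>\<^sub>0 nat. mdeg m = r}"
proof -
  let ?S = "{m :: 'n \<Rightarrow>\<^sub>0 nat. mdeg m = r}"
  have e: "{g :: 'n \<Rightarrow> nat. \<forall>i. g i \<le> r} = PiE UNIV (\<lambda>_. {..r})"
    by (auto simp: PiE_UNIV_domain Pi_def)
  have "Poly_Mapping.lookup ` ?S \<subseteq> {g. \<forall>i. g i \<le> r}"
  proof (rule image_subsetI)
    fix m assume "m \<in> ?S"
    then show "Poly_Mapping.lookup m \<in> {g. \<forall>i. g i \<le> r}" using lookup_le_mdeg[of m] by simp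
  qed
  moreover have "finite {g :: 'n \<Rightarrow> nat. \<forall>i. g i \<le> r}"
    unfolding e by (rule finite_PiE) auto
  ultimately have "finite (Poly_Mapping.lookup ` ?S)" by (rule finite_subset)
  moreover have "inj_on Poly_Mapping.lookup ?S"
    by (rule inj_onI) (rule poly_mapping_eqI, simp)
  ultimately show ?thesis by (rule finite_imageD)
qed

definition Mon :: "nat \<Rightarrow> ('n::finite, 'a::field) mpoly set" where
  "Mon r = (\<lambda>m. Poly_Mapping.single m 1) ` {m. mdeg m = r}"

lemma finite_Mon: "finite (Mon r)"
  unfolding Mon_def by (intro finite_imageI finite_mdeg)

lemma single_smul: "Poly_Mapping.single m c = smul c (Poly_Mapping.single m (1::'a::field))"
  by (simp add: smul_def)

lemma Pdeg_span: "Pdeg r \<subseteq> mpvs.span (Mon r :: ('n::finite, 'a::field) mpoly set)"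
proof
  fix f :: "('n, 'a) mpoly" assume f: "f \<in> Pdeg r"
  have "f = (\<Sum>m\<in>Poly_Mapping.keys f. smul (Poly_Mapping.lookup f m) (Poly_Mapping.single m 1))"
    by (subst mpoly_eq_sum_single[of f]) (simp add: single_smul[symmetric])
  also have "\<dots> \<in> mpvs.span (Mon r)"
    using f by (intro mpvs.span_sum mpvs.span_scale mpvs.span_base) (auto simp: Mon_def Pdeg_def)
  finally show "f \<in> mpvs.span (Mon r)" .
qed

lemma Pdeg_subspace: "mpvs.subspace (Pdeg r :: ('n::finite, 'a::field) mpoly set)"
  by (rule mpvs.subspaceI) (auto intro: Pdeg_add Pdeg_smul)

lemma K_subspace: "mpvs.subspace (Pdeg r \<inter> vanI X :: ('n::finite, 'a::field) mpoly set)"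
  by (rule mpvs.subspaceI) (auto intro: Pdeg_add Pdeg_smul vanI_add vanI_smul)

lemma smul_zero_left[simp]: "smul 0 f = (0 :: ('n, 'a::field) mpoly)"
  by (simp add: smul_Const)

lemma smul_uminus_left: "smul (- c) f = - smul c (f :: ('n, 'a::field) mpoly)"
  by (simp add: smul_Const Const_uminus)

lemma span_disjoint:
  fixes B :: "('n::finite, 'a::field) mpoly set"
  assumes B: "mpvs.independent B" "finite B" and CD: "C \<subseteq> B" "D \<subseteq> B" "C \<inter> D = {}"
    and x: "x \<in> mpvs.span C" "x \<in> mpvs.span D"
  shows "x = 0"
proof -
  have fC: "finite C" using CD(1) B(2) by (rule finite_subset)
  have fD: "finite D" using CD(2) B(2) by (rule finite_subset)
  obtain u where u: "x = (\<Sum>v\<in>C. smul (u v) v)" using x(1) mpvs.span_finite[OF fC] by auto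
  obtain w where w: "x = (\<Sum>v\<in>D. smul (w v) v)" using x(2) mpvs.span_finite[OF fD] by auto
  define t where "t v = (if v \<in> C then u v else - w v)" for v
  have "(\<Sum>v\<in>C \<union> D. smul (t v) v) = (\<Sum>v\<in>C. smul (t v) v) + (\<Sum>v\<in>D. smul (t v) v)"
    by (rule sum.union_disjoint) (use fC fD CD in auto)
  also have "(\<Sum>v\<in>C. smul (t v) v) = x" unfolding u t_def by (intro sum.cong) auto
  also have "(\<Sum>v\<in>D. smul (t v) v) = - x" unfolding w t_def using CD
    by (auto simp: smul_uminus_left sum_negf[symmetric] intro!: sum.cong)
  finally have z: "(\<Sum>v\<in>C \<union> D. smul (t v) v) = 0" by simp
  have "t v = 0" if "v \<in> C" for v
    by (rule mpvs.independentD[OF B(1) _ _ z]) (use fC fD CD that in auto)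
  then have "x = (\<Sum>v\<in>C. smul 0 v)" unfolding u t_def by (intro sum.cong) auto
  then show ?thesis by simp
qed

lemma evm_zero_iff:
  assumes X: "\<forall>p\<in>X. good L p" and f: "f \<in> Pdeg r"
  shows "evm X L f = 0 \<longleftrightarrow> f \<in> vanI X"
  using vanI_Pdeg_iff[OF X f] by (auto simp: evm_def fun_eq_iff)

lemma KL:
  fixes X :: "('a::{field,finite}^'n::finite) set set" and L :: "('n, 'a) mpoly"
  assumes X: "finite X" "\<forall>p\<in>X. good L p"
  shows "\<exists>C. finite C \<and> C \<subseteq> Pdeg r \<and> card C = hf X r \<and> mpvs.span C \<subseteq> Pdeg r \<and>
    inj_on (evm X L) C \<and> fvs.independent (evm X L ` C) \<and> evm X L ` Pdeg r \<subseteq> fvs.span (evm X L ` C)"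
proof -
  interpret h: module_hom smul "\<lambda>c (f::('a^'n) set \<Rightarrow> 'a) x. c * f x" "evm X L" by (rule evm_hom)
  let ?K = "Pdeg r \<inter> vanI X"
  obtain BK where BK: "BK \<subseteq> ?K" "mpvs.independent BK" "?K \<subseteq> mpvs.span BK" "card BK = mpvs.dim ?K"
    by (rule mpvs.basis_exists)
  have "BK \<subseteq> Pdeg r" using BK by auto
  then obtain B where B: "BK \<subseteq> B" "B \<subseteq> Pdeg r" "mpvs.independent B" "Pdeg r \<subseteq> mpvs.span B"
    by (rule mpvs.maximal_independent_subset_extend[OF _ BK(2)])
  have "B \<subseteq> mpvs.span (Mon r)" using B(2) Pdeg_span by blast
  from mpvs.independent_span_bound[OF finite_Mon B(3) this] have fB: "finite B" by simp
  have cB: "card B = mpvs.dim (Pdeg r :: ('n, 'a) mpoly set)" by (rule mpvs.basis_card_eq_dim[OF B(2) B(4) B(3)])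
  define C where "C = B - BK"
  have fC: "finite C" using fB by (simp add: C_def)
  have CP: "C \<subseteq> Pdeg r" using B by (auto simp: C_def)
  have fBK: "finite BK" using fB B(1) finite_subset by auto
  have cC: "card C = hf X r"
    unfolding C_def hf_mpvs using card_Diff_subset[OF fBK B(1)] cB BK(4) by simp
  have spC: "mpvs.span C \<subseteq> Pdeg r" by (rule mpvs.span_minimal[OF CP Pdeg_subspace])
  have spBK: "mpvs.span BK \<subseteq> ?K" by (rule mpvs.span_minimal[OF BK(1) K_subspace])
  have injs: "inj_on (evm X L) (mpvs.span C)"
    unfolding h.inj_on_iff_eq_0[OF mpvs.subspace_span]
  proof (intro ballI impI)
    fix x assume xC: "x \<in> mpvs.span C" and e: "evm X L x = 0"
    then have "x \<in> Pdeg r" using spC by auto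
    then have "x \<in> ?K" using e evm_zero_iff[OF X(2)] by auto
    then have "x \<in> mpvs.span BK" using BK by auto
    moreover have "C \<subseteq> B" "C \<inter> BK = {}" by (auto simp: C_def)
    ultimately show "x = 0"
      using span_disjoint[OF B(3) fB _ B(1) _ xC] by blast
  qed
  have indC: "mpvs.independent C" using B(3) by (rule mpvs.independent_mono) (auto simp: C_def)
  have ind: "fvs.independent (evm X L ` C)" by (rule h.independent_injective_image[OF indC injs])
  have inj: "inj_on (evm X L) C" using injs mpvs.span_superset by (rule inj_on_subset)
  have sp: "evm X L ` Pdeg r \<subseteq> fvs.span (evm X L ` C)"
  proof
    fix g assume "g \<in> evm X L ` Pdeg r"
    then obtain f where f: "f \<in> Pdeg r" "g = evm X L f" by auto
    have "B = BK \<union> C" using B(1) by (auto simp: C_def)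
    then have "f \<in> mpvs.span (BK \<union> C)" using f B(4) by auto
    then obtain x y where xy: "f = x + y" "x \<in> mpvs.span BK" "y \<in> mpvs.span C"
      unfolding mpvs.span_Un by auto
    have "x \<in> ?K" using xy spBK by auto
    then have "evm X L x = 0" using evm_zero_iff[OF X(2)] by auto
    then have "g = evm X L y" using f xy by (simp add: h.add)
    also have "\<dots> \<in> evm X L ` mpvs.span C" using xy by auto
    finally show "g \<in> fvs.span (evm X L ` C)" by (simp add: h.span_image)
  qed
  show ?thesis using fC CP cC spC inj ind sp by blast
qed

lemma sep_from_hf:
  fixes X :: "('a::{field,finite}^'n::finite) set set" and L :: "('n, 'a) mpoly"
  assumes X: "finite X" "\<forall>p\<in>X. good L p" and h: "hf X r = card X" and q: "q \<in> X"
  shows "\<exists>s\<in>Pdeg r. \<forall>p\<in>X. peval s (nrep L p) = (if p = q then 1 else 0)"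
proof -
  interpret h: module_hom smul "\<lambda>c (f::('a^'n) set \<Rightarrow> 'a) x. c * f x" "evm X L" by (rule evm_hom)
  obtain C where C: "finite C" "C \<subseteq> Pdeg r" "card C = hf X r" "mpvs.span C \<subseteq> Pdeg r"
    "inj_on (evm X L) C" "fvs.independent (evm X L ` C)" "evm X L ` Pdeg r \<subseteq> fvs.span (evm X L ` C)"
    using KL[OF X, of r] by blast
  let ?W = "evm X L ` C"
  have cW: "card ?W = card X" using card_image[OF C(5)] C(3) h by simp
  have WE: "?W \<subseteq> fvs.span (ee ` X)"
  proof
    fix g assume "g \<in> ?W"
    then obtain c where "g = evm X L c" by auto
    then show "g \<in> fvs.span (ee ` X)" by (intro fvs_span_support X(1)) (simp add: evm_def)
  qed
  have cE: "card (ee ` X :: (('a^'n) set \<Rightarrow> 'a) set) = card X"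
    by (rule card_image[OF inj_on_subset[OF ee_inj]]) auto
  have "ee q \<in> fvs.span ?W"
  proof (rule ccontr)
    assume nq: "ee q \<notin> fvs.span ?W"
    have ind: "fvs.independent (insert (ee q) ?W)" by (rule fvs.independent_insertI[OF nq C(6)])
    have "ee q \<in> fvs.span (ee ` X)" by (rule fvs.span_base) (use q in auto)
    then have sub: "insert (ee q) ?W \<subseteq> fvs.span (ee ` X)" using WE by auto
    have "card (insert (ee q) ?W) \<le> card (ee ` X :: (('a^'n) set \<Rightarrow> 'a) set)"
      using fvs.independent_span_bound[OF finite_imageI[OF X(1)] ind sub] by simp
    moreover have "ee q \<notin> ?W" using nq fvs.span_base by blast
    then have "card (insert (ee q) ?W) = card ?W + 1" using C(1) by simp
    ultimately show False using cW cE by simp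
  qed
  then have "ee q \<in> evm X L ` mpvs.span C" by (simp add: h.span_image)
  then obtain s where s: "s \<in> mpvs.span C" "evm X L s = ee q" by auto
  have "s \<in> Pdeg r" using s C(4) by auto
  moreover have "peval s (nrep L p) = (if p = q then 1 else 0)" if "p \<in> X" for p
  proof -
    have "evm X L s p = ee q p" using s by simp
    then show ?thesis using that by (simp add: evm_def ee_def)
  qed
  ultimately show ?thesis by blast
qed

lemma hf_from_sep:
  fixes X :: "('a::{field,finite}^'n::finite) set set" and L :: "('n, 'a) mpoly"
  assumes X: "finite X" "\<forall>p\<in>X. good L p"
    and S: "\<forall>q\<in>X. \<exists>s\<in>Pdeg r. \<forall>p\<in>X. peval s (nrep L p) = (if p = q then 1 else 0)"
  shows "hf X r = card X"
proof -
  obtain C where C: "finite C" "C \<subseteq> Pdeg r" "card C = hf X r" "mpvs.span C \<subseteq> Pdeg r"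
    "inj_on (evm X L) C" "fvs.independent (evm X L ` C)" "evm X L ` Pdeg r \<subseteq> fvs.span (evm X L ` C)"
    using KL[OF X, of r] by blast
  let ?W = "evm X L ` C"
  have cW: "card ?W = hf X r" using card_image[OF C(5)] C(3) by simp
  have WE: "?W \<subseteq> fvs.span (ee ` X)"
  proof
    fix g assume "g \<in> ?W"
    then obtain c where "g = evm X L c" by auto
    then show "g \<in> fvs.span (ee ` X)" by (intro fvs_span_support X(1)) (simp add: evm_def)
  qed
  have cE: "card (ee ` X :: (('a^'n) set \<Rightarrow> 'a) set) = card X"
    by (rule card_image[OF inj_on_subset[OF ee_inj]]) auto
  have EW: "ee ` X \<subseteq> fvs.span ?W"
  proof
    fix e assume "e \<in> (ee ` X :: (('a^'n) set \<Rightarrow> 'a) set)"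
    then obtain q where q: "q \<in> X" "e = ee q" by auto
    then obtain s where s: "s \<in> Pdeg r" "\<forall>p\<in>X. peval s (nrep L p) = (if p = q then 1 else 0)"
      using S by blast
    have "evm X L s = ee q"
    proof
      fix p show "evm X L s p = ee q p" using s q by (auto simp: evm_def ee_def)
    qed
    then show "e \<in> fvs.span ?W" using s(1) C(7) q by auto
  qed
  have "card (ee ` X :: (('a^'n) set \<Rightarrow> 'a) set) \<le> card ?W"
    using fvs.independent_span_bound[OF finite_imageI[OF C(1)] ee_indep[OF X(1)] EW] by simp
  moreover have "card ?W \<le> card (ee ` X :: (('a^'n) set \<Rightarrow> 'a) set)"
    using fvs.independent_span_bound[OF finite_imageI[OF X(1)] C(6) WE] by simp
  ultimately show ?thesis using cW cE by simp
qed

definition lin :: "('n::finite \<Rightarrow> 'a::field) \<Rightarrow> ('n, 'a) mpoly" where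
  "lin w = (\<Sum>j\<in>UNIV. Const (w j) * Var j)"

lemma lin_Pdeg: "lin w \<in> Pdeg 1"
  unfolding lin_def by (intro Pdeg_sum Pdeg_Const_mult Pdeg_Var)

lemma peval_lin: "peval (lin w) v = (\<Sum>j\<in>UNIV. w j * v $ j)"
  by (simp add: lin_def peval_sum peval_mult)

lemma proj_pt_scale: "c \<noteq> 0 \<Longrightarrow> proj_pt (c *s v) = proj_pt (v :: 'a::field^'n)"
  unfolding proj_pt_def
proof (rule set_eqI, rule iffI)
  fix x assume "x \<in> {d *s (c *s v) |d. d \<noteq> 0}" "c \<noteq> 0"
  then obtain d where "d \<noteq> 0" "x = d *s (c *s v)" by auto
  then have "x = (d * c) *s v" "d * c \<noteq> 0" using \<open>c \<noteq> 0\<close> by auto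
  then show "x \<in> {d *s v |d. d \<noteq> 0}" by blast
next
  fix x assume "x \<in> {d *s v |d. d \<noteq> 0}" "c \<noteq> 0"
  then obtain d where "d \<noteq> 0" "x = d *s v" by auto
  then have "x = (d / c) *s (c *s v)" "d / c \<noteq> 0" using \<open>c \<noteq> 0\<close> by auto
  then show "x \<in> {d *s (c *s v) |d. d \<noteq> 0}" by blast
qed

lemma ppoint_eq:
  assumes "is_ppoint p" "is_ppoint q" "a \<in> p" "a \<in> q"
  shows "p = q"
proof -
  have *: "r = proj_pt a" if r: "is_ppoint r" "a \<in> r" for r
  proof -
    obtain v where v: "v \<noteq> 0" "r = proj_pt v" using r by (auto simp: is_ppoint_def)
    then obtain c where c: "c \<noteq> 0" "a = c *s v" using r by (auto simp: proj_pt_def)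
    have "proj_pt (c *s v) = proj_pt v" by (rule proj_pt_scale[OF c(1)])
    then show ?thesis using v c by simp
  qed
  show ?thesis using *[OF assms(1,3)] *[OF assms(2,4)] by simp
qed

lemma ppoint_scale:
  assumes "is_ppoint q" "b \<in> q" "c \<noteq> 0"
  shows "c *s b \<in> q"
proof -
  obtain v where v: "v \<noteq> 0" "q = proj_pt v" using assms by (auto simp: is_ppoint_def)
  then obtain d where "d \<noteq> 0" "b = d *s v" using assms by (auto simp: proj_pt_def)
  then have "c *s b = (c * d) *s v" by simp
  then show ?thesis using v assms \<open>d \<noteq> 0\<close> by (auto simp: proj_pt_def)
qed

lemma nrep_nonzero:
  assumes "good L p"
  shows "nrep L p \<noteq> 0"
proof
  assume z: "nrep L p = 0"
  have L1: "L \<in> Pdeg 1" using assms by (simp add: good_def)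
  have "peval L (0 *s nrep L p) = 0" using peval_homog[OF L1, of 0 "nrep L p"] by simp
  then show False using good_nrep(2)[OF assms] z by simp
qed

lemma sep_lin:
  assumes p: "good L p" and q: "good L q" and pq: "p \<noteq> q"
  shows "\<exists>w. peval (lin w) (nrep L q) = 0 \<and> peval (lin w) (nrep L p) = 1"
proof -
  let ?a = "nrep L p" and ?b = "nrep L q"
  obtain i where i: "?b $ i \<noteq> 0" using nrep_nonzero[OF q] by (metis vec_eq_iff zero_index)
  have "\<exists>j. ?b $ i * ?a $ j - ?b $ j * ?a $ i \<noteq> 0"
  proof (rule ccontr)
    assume "\<not> ?thesis"
    then have all: "\<And>j. ?b $ i * ?a $ j = ?b $ j * ?a $ i" by auto
    define c where "c = ?a $ i / ?b $ i"
    have ac: "?a = c *s ?b"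
    proof (subst vec_eq_iff, intro allI)
      fix j
      have "?a $ j = ?b $ j * ?a $ i / ?b $ i" using all[of j] i by (simp add: field_simps)
      then show "?a $ j = (c *s ?b) $ j" by (simp add: c_def)
    qed
    have "c \<noteq> 0" using ac nrep_nonzero[OF p] by auto
    then have "?a \<in> q" using ac ppoint_scale[of q ?b c] good_nrep(1)[OF q] q by (simp add: good_def)
    then have "p = q" using ppoint_eq[of p q ?a] good_nrep(1)[OF p] p q by (simp add: good_def)
    then show False using pq by simp
  qed
  then obtain j where j: "?b $ i * ?a $ j - ?b $ j * ?a $ i \<noteq> 0" by blast
  define t where "t = ?b $ i * ?a $ j - ?b $ j * ?a $ i"
  define w where "w k = inverse t * ((if k = j then ?b $ i else 0) - (if k = i then ?b $ j else 0))" for k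
  have ev: "peval (lin w) v = inverse t * (?b $ i * v $ j - ?b $ j * v $ i)" for v
  proof -
    have "peval (lin w) v = (\<Sum>k\<in>UNIV. inverse t * ((if k = j then ?b $ i * v $ k else 0) - (if k = i then ?b $ j * v $ k else 0)))"
      unfolding peval_lin w_def by (intro sum.cong) (auto simp: algebra_simps)
    also have "\<dots> = inverse t * (?b $ i * v $ j - ?b $ j * v $ i)"
      by (simp add: sum_distrib_left[symmetric] sum_subtractf)
    finally show ?thesis .
  qed
  have "peval (lin w) ?b = 0" by (simp add: ev algebra_simps)
  moreover have "peval (lin w) ?a = 1" using j by (simp add: ev t_def[symmetric])
  ultimately show ?thesis by blast
qed

lemma hf_exists:
  fixes X :: "('a::{field,finite}^'n::finite) set set" and L :: "('n, 'a) mpoly"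
  assumes X: "finite X" "\<forall>p\<in>X. good L p"
  shows "\<exists>r. hf X r = card X"
proof -
  have "\<forall>q\<in>X. \<forall>p\<in>X - {q}. \<exists>w. peval (lin w) (nrep L p) = 0 \<and> peval (lin w) (nrep L q) = 1"
    using sep_lin X(2) by blast
  then obtain W where W: "\<And>q p. q \<in> X \<Longrightarrow> p \<in> X - {q} \<Longrightarrow>
      peval (lin (W q p)) (nrep L p) = 0 \<and> peval (lin (W q p)) (nrep L q) = 1"
    by metis
  have "\<forall>q\<in>X. \<exists>s\<in>Pdeg (card X - 1). \<forall>p\<in>X. peval s (nrep L p) = (if p = q then 1 else 0)"
  proof
    fix q assume q: "q \<in> X"
    let ?s = "\<Prod>p'\<in>X - {q}. lin (W q p')"
    have "?s \<in> Pdeg (\<Sum>p'\<in>X - {q}. 1)" by (rule Pdeg_prod) (rule lin_Pdeg)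
    then have deg: "?s \<in> Pdeg (card X - 1)" using q X(1) by simp
    have "peval ?s (nrep L p) = (if p = q then 1 else 0)" if p: "p \<in> X" for p
    proof (cases "p = q")
      case True
      then have "peval ?s (nrep L p) = (\<Prod>p'\<in>X - {q}. 1)"
        unfolding peval_prod using W q by (intro prod.cong) auto
      then show ?thesis using True by simp
    next
      case False
      then have pX: "p \<in> X - {q}" using p by simp
      have "peval ?s (nrep L p) = (\<Prod>p'\<in>X - {q}. peval (lin (W q p')) (nrep L p))"
        by (simp add: peval_prod)
      also have "\<dots> = 0"
        using X(1) pX W[OF q pX] by (intro prod_zero) auto
      finally show ?thesis using False by simp
    qed
    then show "\<exists>s\<in>Pdeg (card X - 1). \<forall>p\<in>X. peval s (nrep L p) = (if p = q then 1 else 0)"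
      using deg by blast
  qed
  then show ?thesis using hf_from_sep[OF X] by blast
qed

lemma regidx_hf:
  fixes X :: "('a::{field,finite}^'n::finite) set set" and L :: "('n, 'a) mpoly"
  assumes X: "finite X" "\<forall>p\<in>X. good L p"
  shows "hf X (regidx X) = card X"
  unfolding regidx_def using hf_exists[OF X] by (rule LeastI_ex)

lemma sep_prop:
  fixes X :: "('a::{field,finite}^'n::finite) set set" and L :: "('n, 'a) mpoly"
  assumes X: "finite X" "\<forall>p\<in>X. good L p" and q: "q \<in> X"
  shows "sep X L q \<in> Pdeg (regidx X) \<and> (\<forall>p\<in>X. peval (sep X L q) (nrep L p) = (if p = q then 1 else 0))"
proof -
  have "\<exists>s. s \<in> Pdeg (regidx X) \<and> (\<forall>p\<in>X. peval s (nrep L p) = (if p = q then 1 else 0))"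
    using sep_from_hf[OF X regidx_hf[OF X] q] by blast
  then show ?thesis unfolding sep_def by (rule someI_ex)
qed

lemma dim_Pdeg0: "mpvs.dim (Pdeg 0 :: ('n::finite, 'a::field) mpoly set) \<le> 1"
proof -
  have "(Mon 0 :: ('n, 'a) mpoly set) = {Poly_Mapping.single 0 (1::'a)}"
    by (auto simp: Mon_def mdeg_eq_0)
  then have "card (Mon 0 :: ('n, 'a) mpoly set) = 1" by simp
  moreover have "mpvs.dim (Pdeg 0 :: ('n, 'a) mpoly set) \<le> card (Mon 0 :: ('n, 'a) mpoly set)"
    by (rule mpvs.dim_le_card[OF Pdeg_span finite_Mon])
  ultimately show ?thesis by simp
qed

lemma regidx_pos:
  fixes X :: "('a::{field,finite}^'n::finite) set set" and L :: "('n, 'a) mpoly"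
  assumes X: "finite X" "\<forall>p\<in>X. good L p" and c: "card X \<ge> 2"
  shows "regidx X \<ge> 1"
proof (rule ccontr)
  assume "\<not> regidx X \<ge> 1"
  then have "regidx X = 0" by simp
  then have "hf X 0 = card X" using regidx_hf[OF X] by simp
  moreover have "hf X 0 \<le> 1" using dim_Pdeg0[where 'n='n and 'a='a] by (simp add: hf_mpvs)
  ultimately show False using c by simp
qed

lemma FL_lamA:
  assumes "u \<in> FL L"
  shows "lamA A u \<in> FL (lamA A L)"
proof -
  obtain N c where u: "u = (\<Sum>i<N. Const (c i) * L ^ i)" using assms by (auto simp: FL_def)
  have "lamA A u = (\<Sum>i<N. Const (c i) * lamA A L ^ i)"
    by (simp add: u lamA_sum lamA_mult lamA_power)
  then show ?thesis by (auto simp: FL_def)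
qed

lemma vanI_back:
  assumes A: "invertible A" and f: "f \<in> vanI (LamA A ` X)"
  shows "lamA (matrix_inv A) f \<in> vanI X"
  using lamA_vanI[OF invertible_minv[OF A] f] by (simp add: LamA_image_inv[OF A])

lemma is_hom_transfer:
  fixes X :: "('a::{field,finite}^'n::finite) set set"
  assumes A: "invertible A" and h: "is_hom X L \<phi>"
  shows "is_hom (LamA A ` X) (lamA A L) (\<lambda>f. lamA A (\<phi> (lamA (matrix_inv A) f)))"
proof -
  let ?T = "lamA A" and ?T' = "lamA (matrix_inv A)" and ?X' = "LamA A ` X"
  have h1: "\<And>f g. f - g \<in> vanI X \<Longrightarrow> \<phi> f - \<phi> g \<in> vanI X"
   and h2: "\<And>f. \<exists>u\<in>FL L. \<phi> f - u \<in> vanI X"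
   and h3: "\<And>f g. \<phi> (f + g) - (\<phi> f + \<phi> g) \<in> vanI X"
   and h4: "\<And>u f. u \<in> FL L \<Longrightarrow> \<phi> (u * f) - u * \<phi> f \<in> vanI X"
    using h unfolding is_hom_def by blast+
  have fw: "\<And>x. x \<in> vanI X \<Longrightarrow> ?T x \<in> vanI ?X'" by (rule lamA_vanI[OF A])
  have bw: "\<And>x. x \<in> vanI ?X' \<Longrightarrow> ?T' x \<in> vanI X" by (rule vanI_back[OF A])
  show ?thesis unfolding is_hom_def
  proof (intro conjI allI impI ballI)
    fix f g assume "f - g \<in> vanI ?X'"
    then have "?T' f - ?T' g \<in> vanI X" using bw[of "f - g"] by (simp add: lamA_diff)
    then have "\<phi> (?T' f) - \<phi> (?T' g) \<in> vanI X" by (rule h1)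
    then have "?T (\<phi> (?T' f) - \<phi> (?T' g)) \<in> vanI ?X'" by (rule fw)
    then show "?T (\<phi> (?T' f)) - ?T (\<phi> (?T' g)) \<in> vanI ?X'" by (simp add: lamA_diff)
  next
    fix f
    obtain u where u: "u \<in> FL L" "\<phi> (?T' f) - u \<in> vanI X" using h2 by blast
    have "?T u \<in> FL (lamA A L)" by (rule FL_lamA[OF u(1)])
    moreover have "?T (\<phi> (?T' f)) - ?T u \<in> vanI ?X'" using fw[OF u(2)] by (simp add: lamA_diff)
    ultimately show "\<exists>u\<in>FL (lamA A L). ?T (\<phi> (?T' f)) - u \<in> vanI ?X'" by blast
  next
    fix f g
    show "?T (\<phi> (?T' (f + g))) - (?T (\<phi> (?T' f)) + ?T (\<phi> (?T' g))) \<in> vanI ?X'"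
      using fw[OF h3[of "?T' f" "?T' g"]] by (simp add: lamA_diff lamA_add)
  next
    fix u f assume u: "u \<in> FL (lamA A L)"
    have "?T' u \<in> FL (?T' (lamA A L))" by (rule FL_lamA[OF u])
    then have u': "?T' u \<in> FL L" by (simp add: lamA_inv2[OF A])
    have "?T (\<phi> (?T' u * ?T' f) - ?T' u * \<phi> (?T' f)) \<in> vanI ?X'" by (rule fw[OF h4[OF u']])
    then show "?T (\<phi> (?T' (u * f))) - u * ?T (\<phi> (?T' f)) \<in> vanI ?X'"
      by (simp add: lamA_diff lamA_mult lamA_inv1[OF A])
  qed
qed

lemma inj_LamA: "invertible A \<Longrightarrow> inj (LamA A)"
  by (metis injI LamA_inv2)

lemma sep_transfer:
  fixes X :: "('a::{field,finite}^'n::finite) set set" and L :: "('n, 'a) mpoly"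
  assumes A: "invertible A" and X: "finite X" "\<forall>p\<in>X. good L p" and p: "p \<in> X"
  shows "sep (LamA A ` X) (lamA A L) (LamA A p) - lamA A (sep X L p) \<in> vanI (LamA A ` X)"
proof -
  let ?X' = "LamA A ` X" and ?L' = "lamA A L"
  have X': "finite ?X'" "\<forall>p\<in>?X'. good ?L' p" using X good_LamA[OF A] by auto
  have r: "regidx ?X' = regidx X" by (rule regidx_LamA[OF A])
  have s1: "sep ?X' ?L' (LamA A p) \<in> Pdeg (regidx X)"
    "\<forall>p'\<in>?X'. peval (sep ?X' ?L' (LamA A p)) (nrep ?L' p') = (if p' = LamA A p then 1 else 0)"
    using sep_prop[OF X', of "LamA A p"] p r by auto
  have s2: "sep X L p \<in> Pdeg (regidx X)"
    "\<forall>p'\<in>X. peval (sep X L p) (nrep L p') = (if p' = p then 1 else 0)"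
    using sep_prop[OF X p] by auto
  have deg: "sep ?X' ?L' (LamA A p) - lamA A (sep X L p) \<in> Pdeg (regidx X)"
    using s1(1) lamA_Pdeg[OF s2(1)] by (rule Pdeg_diff)
  show ?thesis
    unfolding vanI_Pdeg_iff[OF X'(2) deg]
  proof
    fix p' assume "p' \<in> ?X'"
    then obtain p2 where p2: "p2 \<in> X" "p' = LamA A p2" by auto
    have n: "nrep ?L' p' = A *v nrep L p2" using nrep_LamA[OF A] X(2) p2 by auto
    have eq: "(LamA A p2 = LamA A p) = (p2 = p)" using inj_LamA[OF A] by (auto dest: injD)
    have a: "peval (sep ?X' ?L' (LamA A p)) (nrep ?L' p') = (if p2 = p then 1 else 0)"
      using bspec[OF s1(2) \<open>p' \<in> ?X'\<close>] p2(2) eq by simp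
    have b: "peval (lamA A (sep X L p)) (nrep ?L' p') = (if p2 = p then 1 else 0)"
      using s2(2) p2(1) by (simp add: n peval_lamA_at[OF A])
    show "peval (sep ?X' ?L' (LamA A p) - lamA A (sep X L p)) (nrep ?L' p') = 0"
      by (simp add: peval_diff a b)
  qed
qed

lemma Jhat_transfer:
  fixes X :: "('a::{field,finite}^'n::finite) set set" and L :: "('n, 'a) mpoly"
  assumes A: "invertible A" and X: "finite X" "\<forall>p\<in>X. good L p" and g: "g \<in> Jhat X L"
  shows "lamA A g \<in> Jhat (LamA A ` X) (lamA A L)"
proof -
  let ?T = "lamA A" and ?T' = "lamA (matrix_inv A)" and ?X' = "LamA A ` X" and ?L' = "lamA A L"
  obtain \<phi> where h: "is_hom X L \<phi>" and g': "g - (\<Sum>p\<in>X. \<phi> (sep X L p) * sep X L p) \<in> vanI X"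
    using g by (auto simp: Jhat_def)
  define \<phi>' where "\<phi>' f = ?T (\<phi> (?T' f))" for f
  have h': "is_hom ?X' ?L' \<phi>'" unfolding \<phi>'_def[abs_def] by (rule is_hom_transfer[OF A h])
  have h1: "\<And>f g. f - g \<in> vanI X \<Longrightarrow> \<phi> f - \<phi> g \<in> vanI X" using h unfolding is_hom_def by blast
  have fw: "\<And>x. x \<in> vanI X \<Longrightarrow> ?T x \<in> vanI ?X'" by (rule lamA_vanI[OF A])
  have bw: "\<And>x. x \<in> vanI ?X' \<Longrightarrow> ?T' x \<in> vanI X" by (rule vanI_back[OF A])
  have tm: "\<phi>' (sep ?X' ?L' (LamA A p)) * sep ?X' ?L' (LamA A p) - ?T (\<phi> (sep X L p) * sep X L p) \<in> vanI ?X'"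
    if p: "p \<in> X" for p
  proof -
    let ?s' = "sep ?X' ?L' (LamA A p)" and ?s = "sep X L p"
    have c1: "?s' - ?T ?s \<in> vanI ?X'" by (rule sep_transfer[OF A X p])
    have "?T' ?s' - ?s \<in> vanI X" using bw[OF c1] by (simp add: lamA_diff lamA_inv2[OF A])
    then have "\<phi> (?T' ?s') - \<phi> ?s \<in> vanI X" by (rule h1)
    then have "?T (\<phi> (?T' ?s') - \<phi> ?s) \<in> vanI ?X'" by (rule fw)
    then have c2: "\<phi>' ?s' - ?T (\<phi> ?s) \<in> vanI ?X'" by (simp add: \<phi>'_def lamA_diff)
    show ?thesis using cong_mult[OF c2 c1] by (simp add: lamA_mult)
  qed
  have inj: "inj_on (LamA A) X" using inj_LamA[OF A] by (rule inj_on_subset) simp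
  define S1 where "S1 = (\<Sum>p\<in>X. \<phi>' (sep ?X' ?L' (LamA A p)) * sep ?X' ?L' (LamA A p))"
  define S2 where "S2 = (\<Sum>p\<in>X. ?T (\<phi> (sep X L p) * sep X L p))"
  have e1: "(\<Sum>p'\<in>?X'. \<phi>' (sep ?X' ?L' p') * sep ?X' ?L' p') = S1"
    unfolding S1_def by (rule sum.reindex[OF inj, unfolded comp_def])
  have e2: "S1 - S2 \<in> vanI ?X'"
    unfolding S1_def S2_def by (rule cong_sum) (rule tm)
  have "?T (g - (\<Sum>p\<in>X. \<phi> (sep X L p) * sep X L p)) \<in> vanI ?X'" by (rule fw[OF g'])
  then have e3: "?T g - S2 \<in> vanI ?X'" unfolding S2_def by (simp add: lamA_diff lamA_sum)
  have "?T g - S1 = (?T g - S2) - (S1 - S2)" by simp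
  then have "?T g - S1 \<in> vanI ?X'" using vanI_diff[OF e3 e2] by simp
  then have "?T g - (\<Sum>p'\<in>?X'. \<phi>' (sep ?X' ?L' p') * sep ?X' ?L' p') \<in> vanI ?X'"
    using e1 by simp
  then show ?thesis using h' by (auto simp: Jhat_def)
qed

lemma keys_sum_sub: "Poly_Mapping.keys (\<Sum>i\<in>I. F i) \<subseteq> (\<Union>i\<in>I. Poly_Mapping.keys (F i :: 'x \<Rightarrow>\<^sub>0 'b::comm_monoid_add))"
  by (rule keys_sum)

lemma keys_lamA_ge:
  assumes "\<forall>m\<in>Poly_Mapping.keys f. N \<le> mdeg m"
  shows "\<forall>m\<in>Poly_Mapping.keys (lamA A f). N \<le> mdeg m"
proof
  fix m assume m: "m \<in> Poly_Mapping.keys (lamA A f)"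
  let ?D = "mdeg ` Poly_Mapping.keys f"
  have "f = (\<Sum>j\<in>?D. hcomp j f)" by (rule hcomp_decomp) auto
  then have "lamA A f = lamA A (\<Sum>j\<in>?D. hcomp j f)" by (rule arg_cong)
  also have "\<dots> = (\<Sum>j\<in>?D. lamA A (hcomp j f))" by (rule lamA_sum)
  finally have "m \<in> Poly_Mapping.keys (\<Sum>j\<in>?D. lamA A (hcomp j f))" using m by simp
  then have "m \<in> (\<Union>j\<in>?D. Poly_Mapping.keys (lamA A (hcomp j f)))"
    by (rule subsetD[OF keys_sum_sub])
  then obtain j where j: "j \<in> ?D" "m \<in> Poly_Mapping.keys (lamA A (hcomp j f))"
    by (rule UN_E)
  have "lamA A (hcomp j f) \<in> Pdeg j" by (rule lamA_Pdeg[OF hcomp_Pdeg])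
  then have mj: "mdeg m = j" using j(2) unfolding Pdeg_def by blast
  obtain m0 where "m0 \<in> Poly_Mapping.keys f" "j = mdeg m0" using j(1) by (rule imageE)
  then show "N \<le> mdeg m" using mj assms by simp
qed

lemma vanI_lookup0:
  assumes "p \<in> X" "is_ppoint p" "v \<in> vanI X"
  shows "Poly_Mapping.lookup v 0 = 0"
proof -
  obtain w where "w \<noteq> 0" "p = proj_pt w" using assms(2) by (auto simp: is_ppoint_def)
  then have "w \<in> p" using proj_pt_mem by simp
  then have "peval (hcomp 0 v) w = 0" using assms(1,3) by (auto simp: vanI_def)
  then show ?thesis by (simp add: hcomp_0_Const)
qed

lemma lookup_smul0: "Poly_Mapping.lookup (smul c (f :: ('n::finite, 'a::field) mpoly)) 0 = c * Poly_Mapping.lookup f 0"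
  by (simp only: smul_Const lookup_mult_0) (simp add: lookup_Const)

lemma psi0_gdual: "(\<lambda>f. Poly_Mapping.lookup f 0) \<in> (gdual :: (('n::finite, 'a::field) mpoly \<Rightarrow> 'a) set)"
  unfolding gdual_def mem_Collect_eq
proof (intro conjI allI)
  show "\<exists>N. \<forall>f :: ('n, 'a) mpoly. (\<forall>m\<in>Poly_Mapping.keys f. N \<le> mdeg m) \<longrightarrow> Poly_Mapping.lookup f 0 = 0"
  proof (intro exI[of _ 1] allI impI)
    fix f :: "('n, 'a) mpoly" assume "\<forall>m\<in>Poly_Mapping.keys f. 1 \<le> mdeg m"
    moreover have "\<not> (1 \<le> mdeg (0::'n \<Rightarrow>\<^sub>0 nat))" by simp
    ultimately have "0 \<notin> Poly_Mapping.keys f" by blast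
    then show "Poly_Mapping.lookup f 0 = 0" by (simp add: in_keys_iff)
  qed
qed (simp_all add: lookup_add lookup_smul0)

lemma psi0_perp:
  fixes X :: "('a::{field,finite}^'n::finite) set set" and L :: "('n, 'a) mpoly"
  assumes X: "finite X" "\<forall>p\<in>X. good L p" "card X \<ge> 2"
  shows "(\<lambda>f. Poly_Mapping.lookup f 0) \<in> iperp (Jhat X L)"
  unfolding iperp_def
proof (intro CollectI conjI ballI psi0_gdual)
  fix j assume "j \<in> Jhat X L"
  then obtain \<phi> where j: "j - (\<Sum>p\<in>X. \<phi> (sep X L p) * sep X L p) \<in> vanI X"
    by (auto simp: Jhat_def)
  have r: "regidx X \<ge> 1" by (rule regidx_pos[OF X])
  have "X \<noteq> {}" using X(3) by auto
  then obtain p where p: "p \<in> X" by blast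
  have "is_ppoint p" using X(2) p by (simp add: good_def)
  then have a: "Poly_Mapping.lookup (j - (\<Sum>p\<in>X. \<phi> (sep X L p) * sep X L p)) 0 = 0"
    by (rule vanI_lookup0[OF p _ j])
  have "Poly_Mapping.lookup (sep X L q) 0 = 0" if q: "q \<in> X" for q
  proof -
    have "sep X L q \<in> Pdeg (regidx X)" using sep_prop[OF X(1,2) q] by simp
    then show ?thesis using r by (auto simp: Pdeg_iff)
  qed
  then have b: "Poly_Mapping.lookup (\<Sum>p\<in>X. \<phi> (sep X L p) * sep X L p) 0 = 0"
    by (simp add: lookup_sum lookup_mult_0)
  have "Poly_Mapping.lookup j 0 = 0" using a b by (simp add: lookup_minus)
  then show "contr j (\<lambda>f. Poly_Mapping.lookup f 0) = (\<lambda>_. 0)"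
    by (simp add: contr_def fun_eq_iff lookup_mult_0)
qed

theorem theorem7p7:
  fixes X X' :: "('a::{field,finite}^'n::finite) set set"
    and L L' :: "('n, 'a) mpoly"
    and \<Phi> \<Phi>' :: "('n, 'a) mpoly \<Rightarrow> 'a"
    and A :: "'a^'n^'n" and n :: nat
  assumes "n \<ge> 2"
    and "finite X" "card X = n" "\<forall>p\<in>X. is_ppoint p"
    and "finite X'" "card X' = n" "\<forall>p\<in>X'. is_ppoint p"
    and "L \<in> Pdeg 1" "\<forall>p\<in>X. \<forall>v\<in>p. peval L v \<noteq> 0"
    and "L' \<in> Pdeg 1" "\<forall>p\<in>X'. \<forall>v\<in>p. peval L' v \<noteq> 0"
    and "is_mip X L \<Phi>" "is_mip X' L' \<Phi>'"
    and "invertible A" "lamA A L = L'"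
    and "LamA A ` X = X'"
  shows "regidx X = regidx X' \<and>
         (\<exists>c. c \<noteq> 0 \<and> (\<forall>g\<in>Pdeg (2 * regidx X - 1). \<Phi>' (lamA A g) = c * \<Phi> g))"
proof -
  have A: "invertible A" by fact
  have gX: "\<forall>p\<in>X. good L p" using assms(4,8,9) by (auto simp: good_def)
  have gX': "\<forall>p\<in>X'. good L' p" using assms(7,10,11) by (auto simp: good_def)
  have X'eq: "X' = LamA A ` X" using assms(16) by simp
  have L'eq: "L' = lamA A L" using assms(15) by simp
  have r: "regidx X = regidx X'" using regidx_LamA[OF A, of X] X'eq by simp
  define N where "N = 2 * regidx X - 1"
  have m1: "\<Phi> \<in> gdual" "\<And>g. \<Phi> g = \<Phi> (hcomp N g)" "iperp (Jhat X L) = {contr f \<Phi> |f. True}"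
    using assms(12) by (auto simp: is_mip_def N_def)
  have m2: "\<Phi>' \<in> gdual" "\<And>g. \<Phi>' g = \<Phi>' (hcomp N g)" "iperp (Jhat X' L') = {contr f \<Phi>' |f. True}"
    using assms(13) r by (auto simp: is_mip_def N_def)
  have gd1: "\<And>f g. \<Phi> (f + g) = \<Phi> f + \<Phi> g" "\<And>c f. \<Phi> (smul c f) = c * \<Phi> f"
    using m1(1) by (auto simp: gdual_def)
  have gd2: "\<And>f g. \<Phi>' (f + g) = \<Phi>' f + \<Phi>' g" "\<And>c f. \<Phi>' (smul c f) = c * \<Phi>' f"
    using m2(1) by (auto simp: gdual_def)
  obtain N0 where N0: "\<And>f. (\<forall>m\<in>Poly_Mapping.keys f. N0 \<le> mdeg m) \<Longrightarrow> \<Phi>' f = 0"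
    using m2(1) by (auto simp: gdual_def)
  have "contr 1 \<Phi>' = \<Phi>'" by (simp add: contr_def)
  then have P'perp: "\<Phi>' \<in> iperp (Jhat X' L')" using m2(3) by (metis (mono_tags, lifting) mem_Collect_eq)
  define \<Psi> where "\<Psi> g = \<Phi>' (lamA A g)" for g
  have Psi_gd: "\<Psi> \<in> gdual"
    unfolding gdual_def mem_Collect_eq
  proof (intro conjI allI)
    fix f g show "\<Psi> (f + g) = \<Psi> f + \<Psi> g" by (simp add: \<Psi>_def lamA_add gd2)
  next
    fix c f show "\<Psi> (smul c f) = c * \<Psi> f" by (simp add: \<Psi>_def lamA_smul gd2)
  next
    show "\<exists>N. \<forall>f. (\<forall>m\<in>Poly_Mapping.keys f. N \<le> mdeg m) \<longrightarrow> \<Psi> f = 0"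
      by (intro exI[of _ N0] allI impI) (simp add: \<Psi>_def N0 keys_lamA_ge)
  qed
  have Psi_perp: "\<Psi> \<in> iperp (Jhat X L)"
    unfolding iperp_def
  proof (intro CollectI conjI ballI Psi_gd)
    fix j assume j: "j \<in> Jhat X L"
    have "lamA A j \<in> Jhat X' L'" using Jhat_transfer[OF A assms(2) gX j] X'eq L'eq by simp
    then have z: "contr (lamA A j) \<Phi>' = (\<lambda>_. 0)" using P'perp by (auto simp: iperp_def)
    show "contr j \<Psi> = (\<lambda>_. 0)"
    proof
      fix g
      have "contr j \<Psi> g = contr (lamA A j) \<Phi>' (lamA A g)" by (simp add: contr_def \<Psi>_def lamA_mult)
      then show "contr j \<Psi> g = 0" using z by simp
    qed
  qed
  then obtain h where h: "\<Psi> = contr h \<Phi>" using m1(3) by auto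
  define c where "c = Poly_Mapping.lookup h 0"
  have key: "\<Phi>' (lamA A g) = c * \<Phi> g" if g: "g \<in> Pdeg N" for g
  proof -
    have "\<Phi>' (lamA A g) = \<Phi> (h * g)" using h by (simp add: \<Psi>_def[symmetric] contr_def)
    also have "\<dots> = \<Phi> (hcomp N (h * g))" by (rule m1(2))
    also have "\<dots> = \<Phi> (smul c g)" by (simp add: hcomp_mult_Pdeg[OF g] c_def smul_Const)
    also have "\<dots> = c * \<Phi> g" by (rule gd1(2))
    finally show ?thesis .
  qed
  have c0: "c \<noteq> 0"
  proof
    assume c: "c = 0"
    have z1: "\<Phi>' g = 0" if g: "g \<in> Pdeg N" for g
    proof -
      have "lamA (matrix_inv A) g \<in> Pdeg N" by (rule lamA_Pdeg[OF g])
      then have "\<Phi>' (lamA A (lamA (matrix_inv A) g)) = c * \<Phi> (lamA (matrix_inv A) g)" by (rule key)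
      then show ?thesis using c by (simp add: lamA_inv1[OF A])
    qed
    have z: "\<Phi>' = (\<lambda>_. 0)"
    proof
      fix f show "\<Phi>' f = 0" using m2(2)[of f] z1[OF hcomp_Pdeg] by simp
    qed
    have n2: "card X' \<ge> 2" using assms(1,6) by simp
    have "(\<lambda>f. Poly_Mapping.lookup f 0) \<in> iperp (Jhat X' L')" by (rule psi0_perp[OF assms(5) gX' n2])
    then obtain f where "(\<lambda>f. Poly_Mapping.lookup f 0) = contr f \<Phi>'" using m2(3) by auto
    then have "Poly_Mapping.lookup (1 :: ('n, 'a) mpoly) 0 = contr f \<Phi>' 1" by metis
    then show False using z by (simp add: contr_def)
  qed
  show ?thesis using r key c0 by (auto simp: N_def)
qed

end
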